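(* Let $I$ be a composition of $n$ and $k\ge1$. With $V'_I=V_{\overline{I}^{\sim}}$, one has in $\mathbf{Sym}$ $$V'_I\,\Lambda_k=\sum_{j=0}^{n}\binom{k+j-1}{k-1}\,V'_{(I[n-j],\,k+j)},$$ where $(I[n-j],k+j)$ denotes the composition obtained by appending the part $k+j$ to $I[n-j]$.
   Context: Permutations are words. A word $a_1\cdots a_m$ is initially dominated if $a_1>a_j$ for all $j\ge2$; every permutation factors uniquely as $\sigma=u_1\cdots u_r$ into initially dominated words with increasing first letters, and $\mathrm{SC}(\sigma)=(|u_1|,\ldots,|u_r|)$. For a composition $I=(i_1,\ldots,i_r)$ of $n$, $\mathrm{Des}(I)=\{i_1,\ldots,i_1+\cdots+i_{r-1}\}$ and $\overline{I}^{\sim}$ is the composition of $n$ with descent set $\{1,\ldots,n-1\}\setminus\mathrm{Des}(I)$. $\mathrm{RC}(\sigma)$ is the composition with descent set $\{i: i+1\text{ is left of } i\text{ in }\sigma\}$. In $QSym$ (fundamental basis $F_I$) define $U_J=\sum_{\mathrm{SC}(\sigma)=\overline{J}^{\sim}}F_{\mathrm{RC}(\sigma)}$; the $U_J$ form a basis of $QSym$. $\mathbf{Sym}$ is the algebra of noncommutative symmetric functions with ribbon basis $R_I$, in duality with $QSym$ via $\langle F_I,R_J\rangle=\delta_{IJ}$; $(V_I)$ is the basis of $\mathbf{Sym}$ dual to $(U_I)$, and $\Lambda_k=R_{1^k}$ is the noncommutative elementary symmetric function. For $0\le m\le n$, $I[m]$ is the composition of $m$ whose ribbon diagram consists of the first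 $m$ boxes of that of $I$, i.e. $I[m]=(i_1,\ldots,i_{s-1},m-(i_1+\cdots+i_{s-1}))$ for the appropriate $s$ (and $I[0]$ is the empty composition). *)

theory Defs
  imports Complex_Main
begin

definition comps :: "nat \<Rightarrow> nat list set" where
  "comps n = {I. sum_list I = n \<and> 0 \<notin> set I}"

definition perms :: "nat \<Rightarrow> nat list set" where
  "perms n = {s. distinct s \<and> set s = {1..n}}"

definition des :: "nat list \<Rightarrow> nat set" where
  "des I = {sum_list (take j I) | j. 1 \<le> j \<and> j < length I}"

definition comp_of_des :: "nat \<Rightarrow> nat set \<Rightarrow> nat list" where
  "comp_of_des n D = (THE I. I \<in> comps n \<and> des I = D)"

text \<open>The composition with complementary descent set (the paper's I-bar-tilde).\<close>
definition conj :: "nat list \<Rightarrow> nat list" where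
  "conj I = comp_of_des (sum_list I) ({1..<sum_list I} - des I)"

definition init_dom :: "nat list \<Rightarrow> bool" where
  "init_dom w \<longleftrightarrow> w \<noteq> [] \<and> (\<forall>j. 1 \<le> j \<and> j < length w \<longrightarrow> w ! j < w ! 0)"

definition SC :: "nat list \<Rightarrow> nat list" where
  "SC s = (THE L. \<exists>us. concat us = s \<and> (\<forall>u\<in>set us. init_dom u)
              \<and> sorted_wrt (<) (map hd us) \<and> L = map length us)"

definition RC :: "nat list \<Rightarrow> nat list" where
  "RC s = comp_of_des (length s)
     {i. 1 \<le> i \<and> i < length s \<and>
         (\<exists>p q. p < q \<and> q < length s \<and> s ! p = i + 1 \<and> s ! q = i)}"

text \<open>U_J = sum over sigma in S_n with SC(sigma) = conj J of F_(RC sigma);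
  ucoef J K is the coefficient of F_K in U_J.\<close>
definition ucoef :: "nat list \<Rightarrow> nat list \<Rightarrow> nat" where
  "ucoef J K = card {s \<in> perms (sum_list J). SC s = conj J \<and> RC s = K}"

text \<open>Elements of Sym are represented by their coefficient functions in the
  ribbon basis (K \<mapsto> coefficient of R_K).\<close>
type_synonym sym = "nat list \<Rightarrow> rat"

text \<open>Duality pairing <U_J, v> using <F_I, R_K> = delta.\<close>
definition pairU :: "nat list \<Rightarrow> sym \<Rightarrow> rat" where
  "pairU J v = (\<Sum>K\<in>comps (sum_list J). of_nat (ucoef J K) * v K)"

definition V :: "nat list \<Rightarrow> sym" where
  "V I = (THE v. (\<forall>K. K \<notin> comps (sum_list I) \<longrightarrow> v K = 0) \<and>
                 (\<forall>J\<in>comps (sum_list I). pairU J v = (if J = I then 1 else 0)))"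

definition Vp :: "nat list \<Rightarrow> sym" where
  "Vp I = V (conj I)"

text \<open>Ribbon product: R_I R_J = R_(I.J) + R_(I|>J) (second term only if both nonempty).\<close>
definition glue :: "nat list \<Rightarrow> nat list \<Rightarrow> nat list" where
  "glue I J = butlast I @ [last I + hd J] @ tl J"

definition ribcoef :: "nat list \<Rightarrow> nat list \<Rightarrow> nat list \<Rightarrow> rat" where
  "ribcoef I J K = (if K = I @ J then 1 else 0)
      + (if I \<noteq> [] \<and> J \<noteq> [] \<and> K = glue I J then 1 else 0)"

definition symmult :: "sym \<Rightarrow> sym \<Rightarrow> sym" where
  "symmult f g = (\<lambda>K. \<Sum>m\<in>{0..sum_list K}. \<Sum>I\<in>comps m. \<Sum>J\<in>comps (sum_list K - m).
        f I * g J * ribcoef I J K)"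

text \<open>Lambda_k = R_(1^k).\<close>
definition Lambda :: "nat \<Rightarrow> sym" where
  "Lambda k = (\<lambda>K. if K = replicate k 1 then 1 else 0)"

text \<open>I[m]: first m boxes of the ribbon diagram of I.\<close>
fun trunc :: "nat list \<Rightarrow> nat \<Rightarrow> nat list" where
  "trunc [] m = []"
| "trunc (i # I) m = (if m = 0 then [] else if m \<le> i then [m] else i # trunc I (m - i))"

end

theory Submission
  imports Defs
begin


lemma finite_comps: "finite (comps n)"
proof -
  have "comps n \<subseteq> {xs. set xs \<subseteq> {0..n} \<and> length xs \<le> n}"
  proof
    fix I assume "I \<in> comps n"
    hence s: "sum_list I = n" and z: "0 \<notin> set I" by (auto simp: comps_def)
    have "length I \<le> sum_list I" using z
      by (induction I) (auto simp: Suc_le_eq)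
    moreover have "set I \<subseteq> {0..n}" using s
      by (auto simp: member_le_sum_list)
    ultimately show "I \<in> {xs. set xs \<subseteq> {0..n} \<and> length xs \<le> n}" using s by auto
  qed
  thus ?thesis by (rule finite_subset) (rule finite_lists_length_le, simp)
qed

lemma des_snoc: "des (I @ [a]) = (if I = [] then {} else insert (sum_list I) (des I))"
proof -
  have tk: "\<And>j. j \<le> length I \<Longrightarrow> take j (I @ [a]) = take j I" by simp
  have "des (I @ [a]) = (\<lambda>j. sum_list (take j I)) ` {1..length I}"
    unfolding des_def using tk by (force simp: less_Suc_eq_le)
  also have "\<dots> = (if I = [] then {} else insert (sum_list I) (des I))"
  proof (cases "I = []")
    case False
    have "length I \<ge> 1" using False by (cases I) auto
    hence "{1..length I} = insert (length I) {1..<length I}" by auto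
    hence "(\<lambda>j. sum_list (take j I)) ` {1..length I} =
       insert (sum_list I) ((\<lambda>j. sum_list (take j I)) ` {1..<length I})" by simp
    also have "(\<lambda>j. sum_list (take j I)) ` {1..<length I} = des I"
      unfolding des_def by auto
    finally show ?thesis using False by simp
  qed simp
  finally show ?thesis .
qed

lemma des_Nil[simp]: "des [] = {}" by (simp add: des_def)
lemma des_single[simp]: "des [a] = {}" by (simp add: des_def)

lemma comps_snoc: "I @ [a] \<in> comps m \<longleftrightarrow> I \<in> comps (m - a) \<and> a > 0 \<and> a \<le> m"
  by (auto simp: comps_def)

lemma comps0: "comps 0 = {[]}"
  by (auto simp: comps_def) (metis list.set_intros(1) neq_Nil_conv sum_list_eq_0_iff)

lemma des_sub: "I \<in> comps n \<Longrightarrow> des I \<subseteq> {1..<n}"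
proof (induction I arbitrary: n rule: rev_induct)
  case Nil thus ?case by simp
next
  case (snoc a I)
  hence "I \<in> comps (n - a)" "a > 0" "a \<le> n" by (auto simp: comps_snoc)
  moreover have "I \<noteq> [] \<Longrightarrow> sum_list I \<ge> 1" using calculation(1)
    by (cases I) (auto simp: comps_def)
  moreover have IH: "des I \<subseteq> {1..<n - a}" using snoc.IH calculation(1) by blast
  have "{1..<n - a} \<subseteq> {1..<n}" by auto
  with IH have d2: "des I \<subseteq> {1..<n}" by (rule subset_trans)
  have "I \<noteq> [] \<Longrightarrow> sum_list I \<in> {1..<n}" using calculation by (auto simp: comps_def)
  thus ?case using d2 by (auto simp: des_snoc)
qed

lemma des_inj: "I \<in> comps n \<Longrightarrow> J \<in> comps n \<Longrightarrow> des I = des J \<Longrightarrow> I = J"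
proof (induction I arbitrary: J n rule: rev_induct)
  case Nil
  hence "n = 0" by (simp add: comps_def)
  thus ?case using Nil comps0 by auto
next
  case (snoc a I)
  have Jne: "J \<noteq> []" using snoc.prems by (auto simp: comps_def)
  then obtain J' b where J: "J = J' @ [b]" by (metis rev_exhaust)
  have I': "I \<in> comps (n - a)" and J': "J' \<in> comps (n - b)"
    using snoc.prems J by (auto simp: comps_snoc)
  have pI: "I \<noteq> [] \<Longrightarrow> sum_list I \<ge> 1" using I' by (cases I) (auto simp: comps_def)
  have pJ: "J' \<noteq> [] \<Longrightarrow> sum_list J' \<ge> 1" using J' by (cases J') (auto simp: comps_def)
  show ?case
  proof (cases "I = []")
    case True
    hence "des J = {}" using snoc.prems by (simp add: des_snoc)
    hence "J' = []" using J by (auto simp: des_snoc split: if_splits)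
    thus ?thesis using True J snoc.prems by (auto simp: comps_def)
  next
    case False
    hence "des (I @ [a]) \<noteq> {}" by (simp add: des_snoc)
    hence "des J \<noteq> {}" using snoc.prems(3) by simp
    hence J'ne: "J' \<noteq> []" using J by (auto simp: des_snoc)
    have dI: "des (I @ [a]) = insert (sum_list I) (des I)" using False by (simp add: des_snoc)
    have dJ: "des J = insert (sum_list J') (des J')" using J'ne J by (simp add: des_snoc)
    have sI: "des I \<subseteq> {1..<sum_list I}" using des_sub[OF I'] I' by (simp add: comps_def)
    have sJ: "des J' \<subseteq> {1..<sum_list J'}" using des_sub[OF J'] J' by (simp add: comps_def)
    have "Max (des (I@[a])) = sum_list I" unfolding dI using sI
      by (intro Max_eqI) (auto simp: finite_subset)
    moreover have "Max (des J) = sum_list J'" unfolding dJ using sJ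
      by (intro Max_eqI) (auto simp: finite_subset)
    ultimately have eqs: "sum_list I = sum_list J'" using snoc.prems by simp
    have "des I = des J'"
    proof -
      have "des I = des (I@[a]) - {sum_list I}" using dI sI by auto
      also have "\<dots> = des J - {sum_list J'}" using snoc.prems eqs by simp
      also have "\<dots> = des J'" using dJ sJ by auto
      finally show ?thesis .
    qed
    moreover have "J' \<in> comps (sum_list I)" using J' eqs by (simp add: comps_def)
    moreover have "I \<in> comps (sum_list I)" using I' by (simp add: comps_def)
    ultimately have "I = J'" using snoc.IH by blast
    moreover have "a = b" using snoc.prems J eqs \<open>I = J'\<close> by (auto simp: comps_def)
    ultimately show ?thesis using J by simp
  qed
qed

lemma des_exists: "D \<subseteq> {1..<n} \<Longrightarrow> \<exists>I\<in>comps n. des I = D"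
proof (induction n arbitrary: D rule: less_induct)
  case (less n)
  show ?case
  proof (cases "D = {}")
    case True
    show ?thesis
    proof (cases "n = 0")
      case True
      have "[] \<in> comps n" using True by (simp add: comps_def)
      thus ?thesis using \<open>D = {}\<close> by force
    next
      case False
      have "[n] \<in> comps n" using False by (simp add: comps_def)
      thus ?thesis using \<open>D = {}\<close> by force
    qed
  next
    case False
    have fin: "finite D" using less.prems finite_subset by blast
    define d where "d = Max D"
    have dD: "d \<in> D" using False fin by (simp add: d_def)
    have "d \<in> {1..<n}" using less.prems dD by (rule subsetD)
    hence dn: "d < n" "d \<ge> 1" by auto
    have "D - {d} \<subseteq> {1..<d}"
    proof
      fix x assume x: "x \<in> D - {d}"
      hence "x \<le> d" using fin d_def by simp
      moreover have "x \<in> {1..<n}" using less.prems x by (meson DiffD1 subsetD)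
      ultimately show "x \<in> {1..<d}" using x by auto
    qed
    then obtain I where I: "I \<in> comps d" "des I = D - {d}" using less.IH[OF dn(1)] by blast
    have sI: "sum_list I = d" "0 \<notin> set I" using I(1) by (auto simp: comps_def)
    have Ine: "I \<noteq> []" using sI dn by auto
    have "I @ [n - d] \<in> comps n" using sI dn by (simp add: comps_def)
    moreover have "des (I @ [n - d]) = insert d (D - {d})"
      using I(2) Ine sI by (simp add: des_snoc)
    moreover have "insert d (D - {d}) = D" using dD by blast
    ultimately show ?thesis by metis
  qed
qed

lemma comp_of_des: assumes "D \<subseteq> {1..<n}"
  shows "comp_of_des n D \<in> comps n" "des (comp_of_des n D) = D"
proof -
  obtain I where I: "I \<in> comps n" "des I = D" using des_exists[OF assms] by blast
  have "comp_of_des n D = I" unfolding comp_of_des_def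
    using I des_inj by (intro the_equality) auto
  thus "comp_of_des n D \<in> comps n" "des (comp_of_des n D) = D" using I by auto
qed

lemma comp_of_des_des: "I \<in> comps n \<Longrightarrow> comp_of_des n (des I) = I"
  using comp_of_des[OF des_sub] des_inj by blast

lemma conj_props: assumes "I \<in> comps n"
  shows "conj I \<in> comps n" "des (conj I) = {1..<n} - des I" "conj (conj I) = I"
proof -
  have s: "sum_list I = n" using assms by (simp add: comps_def)
  show c: "conj I \<in> comps n" "des (conj I) = {1..<n} - des I"
    unfolding conj_def s by (rule comp_of_des, blast)+
  have "sum_list (conj I) = n" using c by (simp add: comps_def)
  hence "conj (conj I) = comp_of_des n ({1..<n} - ({1..<n} - des I))"
    unfolding conj_def[of "conj I"] c(2) by simp
  also have "{1..<n} - ({1..<n} - des I) = des I" using des_sub[OF assms] by auto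
  finally show "conj (conj I) = I" using comp_of_des_des[OF assms] by simp
qed




lemma des_rep1: "des (A @ replicate m 1) =
   (if A = [] then {1..<m} else des A \<union> {sum_list A..<sum_list A + m})"
proof (induction m)
  case 0 thus ?case by simp
next
  case (Suc m)
  have e: "A @ replicate (Suc m) 1 = (A @ replicate m 1) @ [1]"
    by (simp add: replicate_append_same[symmetric])
  have sl: "sum_list (A @ replicate m 1) = sum_list A + m" by (simp add: sum_list_replicate)
  show ?case
  proof (cases "A = []")
    case True
    show ?thesis
    proof (cases m)
      case 0 thus ?thesis using True by simp
    next
      case (Suc m')
      have "des (A @ replicate (Suc m) 1) = insert m {1..<m}"
        unfolding e des_snoc using Suc.IH True sl \<open>m = Suc m'\<close> by simp
      also have "\<dots> = {1..<Suc m}" using \<open>m = Suc m'\<close> by auto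
      finally show ?thesis using True by simp
    qed
  next
    case False
    have "des (A @ replicate (Suc m) 1) = insert (sum_list A + m) (des A \<union> {sum_list A..<sum_list A + m})"
      unfolding e des_snoc using Suc.IH False sl by simp
    also have "\<dots> = des A \<union> {sum_list A..<sum_list A + Suc m}" by auto
    finally show ?thesis using False by simp
  qed
qed


lemma trunc_comps: "I \<in> comps n \<Longrightarrow> m \<le> n \<Longrightarrow> trunc I m \<in> comps m"
proof (induction I arbitrary: n m)
  case Nil thus ?case by (simp add: comps_def)
next
  case (Cons i I)
  show ?case
  proof (cases "m = 0")
    case True thus ?thesis by (simp add: comps_def)
  next
    case False
    show ?thesis
    proof (cases "m \<le> i")
      case True thus ?thesis using False by (simp add: comps_def)
    next
      case F2: False
      have "I \<in> comps (n - i)" using Cons.prems by (auto simp: comps_def)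
      hence "trunc I (m - i) \<in> comps (m - i)" using Cons.IH Cons.prems by auto
      thus ?thesis using False F2 Cons.prems by (auto simp: comps_def)
    qed
  qed
qed

lemma des_bump: "A \<noteq> [] \<Longrightarrow> des (butlast A @ [last A + c]) = des A"
  by (metis append_butlast_last_id des_snoc)





definition isfact :: "nat list list \<Rightarrow> nat list \<Rightarrow> bool" where
  "isfact us s \<longleftrightarrow> concat us = s \<and> (\<forall>u\<in>set us. init_dom u) \<and> sorted_wrt (<) (map hd us)"

lemma init_dom_le: "init_dom u \<Longrightarrow> x \<in> set u \<Longrightarrow> x \<le> hd u"
proof -
  assume a: "init_dom u" "x \<in> set u"
  then obtain j where j: "j < length u" "u ! j = x" by (auto simp: in_set_conv_nth)
  show ?thesis
  proof (cases "j = 0")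
    case True thus ?thesis using j a by (simp add: hd_conv_nth init_dom_def)
  next
    case False thus ?thesis using j a unfolding init_dom_def
      by (metis hd_conv_nth less_imp_le_nat less_one not_less)
  qed
qed

lemma isfact_max:
  assumes "isfact (us @ [u]) s"
  shows "\<forall>x\<in>set s. x \<le> hd u"
proof
  fix x assume "x \<in> set s"
  hence "x \<in> set (concat (us @ [u]))" using assms by (simp add: isfact_def)
  hence "\<exists>v\<in>set (us @ [u]). x \<in> set v" by auto
  then obtain v where v: "v \<in> set (us @ [u])" "x \<in> set v" by blast
  have "x \<le> hd v" using v assms init_dom_le by (auto simp: isfact_def)
  moreover have "hd v \<le> hd u"
  proof (cases "v = u")
    case False
    hence "v \<in> set us" using v by simp
    thus ?thesis using assms by (auto simp: isfact_def sorted_wrt_append)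
  qed simp
  ultimately show "x \<le> hd u" by simp
qed

lemma init_dom_Cons: assumes "\<forall>y\<in>set ys. y < m" shows "init_dom (m # ys)"
  unfolding init_dom_def
proof (intro conjI allI impI)
  fix j assume j: "1 \<le> j \<and> j < length (m # ys)"
  hence "ys ! (j - 1) \<in> set ys" by (intro nth_mem) auto
  hence "ys ! (j - 1) < m" using assms by blast
  thus "(m # ys) ! j < (m # ys) ! 0" using j by (simp add: nth_Cons')
qed simp

lemma init_dom_ne: "init_dom u \<Longrightarrow> u \<noteq> []" by (simp add: init_dom_def)

lemma isfact_Nil: "isfact us [] \<longleftrightarrow> us = []"
  unfolding isfact_def by (cases us) (auto simp: init_dom_def)

lemma isfact_unique:
  "isfact us s \<Longrightarrow> isfact vs s \<Longrightarrow> distinct s \<Longrightarrow> us = vs"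
proof (induction us arbitrary: vs s rule: rev_induct)
  case Nil
  hence "s = []" by (simp add: isfact_def)
  thus ?case using Nil.prems(2) isfact_Nil by metis
next
  case (snoc u us)
  have "s \<noteq> []" using snoc.prems(1) by (auto simp: isfact_def dest: init_dom_ne)
  hence "vs \<noteq> []" using snoc.prems(2) by (auto simp: isfact_def)
  then obtain vs' v where vs: "vs = vs' @ [v]" by (metis rev_exhaust)
  have une: "u \<noteq> []" "v \<noteq> []" using snoc.prems vs by (auto simp: isfact_def dest: init_dom_ne)
  have s1: "s = concat us @ hd u # tl u" using snoc.prems une by (simp add: isfact_def)
  have s2: "s = concat vs' @ hd v # tl v" using snoc.prems une vs by (simp add: isfact_def)
  have m1: "\<forall>x\<in>set s. x \<le> hd u" using isfact_max snoc.prems(1) by blast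
  have m2: "\<forall>x\<in>set s. x \<le> hd v" using isfact_max snoc.prems(2) vs by blast
  have "hd u \<in> set s" unfolding s1 by simp
  moreover have "hd v \<in> set s" unfolding s2 by simp
  ultimately have h: "hd u = hd v" using m1 m2 by (simp add: antisym)
  have d1: "hd u \<notin> set (concat us)" using snoc.prems(3) s1 by auto
  have d2: "hd u \<notin> set (concat vs')" using snoc.prems(3) s2 h by auto
  have d3: "hd u \<notin> set (tl u)" using snoc.prems(3) s1 by auto
  have "concat us @ hd u # tl u = concat vs' @ hd u # tl v" using s1 s2 h by simp
  hence "concat us = concat vs' \<and> tl u = tl v"
    using append_Cons_eq_iff[OF d1 d3] by blast
  hence uv: "u = v" using une h by (metis list.collapse)
  have "isfact us (concat us)" "isfact vs' (concat us)"
    using snoc.prems vs \<open>concat us = concat vs' \<and> tl u = tl v\<close>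
    by (auto simp: isfact_def sorted_wrt_append)
  moreover have "distinct (concat us)" using snoc.prems(3) s1 by simp
  ultimately have "us = vs'" using snoc.IH by blast
  thus ?case using vs uv by simp
qed

lemma isfact_exists: "distinct s \<Longrightarrow> \<exists>us. isfact us s"
proof (induction "length s" arbitrary: s rule: less_induct)
  case less
  show ?case
  proof (cases "s = []")
    case True thus ?thesis by (intro exI[of _ "[]"]) (simp add: isfact_def)
  next
    case False
    define m where "m = Max (set s)"
    have "m \<in> set s" using False by (simp add: m_def)
    then obtain xs ys where s: "s = xs @ m # ys" by (meson split_list)
    have "length xs < length s" using s by simp
    moreover have "distinct xs" using less.prems s by simp
    ultimately obtain us where us: "isfact us xs" using less.hyps by blast
    have mx: "\<forall>x\<in>set s. x \<le> m" by (simp add: m_def)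
    have ltx: "\<forall>x\<in>set xs. x < m" using mx s less.prems by (auto simp: le_less)
    have lty: "\<forall>x\<in>set ys. x < m" using mx s less.prems by (auto simp: le_less)
    have "init_dom (m # ys)" using lty by (rule init_dom_Cons)
    moreover have "\<forall>h\<in>set (map hd us). h < m"
    proof
      fix h assume "h \<in> set (map hd us)"
      then obtain u where u: "u \<in> set us" "h = hd u" by auto
      hence "u \<noteq> []" using us by (auto simp: isfact_def dest: init_dom_ne)
      hence "h \<in> set u" using u by simp
      hence "h \<in> set (concat us)" using u by auto
      hence "h \<in> set xs" using us unfolding isfact_def by blast
      thus "h < m" using ltx by simp
    qed
    ultimately have "isfact (us @ [m # ys]) s" using us s
      by (auto simp: isfact_def sorted_wrt_append)
    thus ?thesis by blast
  qed
qed

lemma SC_eq: "isfact us s \<Longrightarrow> distinct s \<Longrightarrow> SC s = map length us"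
  unfolding SC_def
proof (rule the_equality)
  assume "isfact us s" "distinct s"
  thus "\<exists>usa. concat usa = s \<and> (\<forall>u\<in>set usa. init_dom u) \<and> sorted_wrt (<) (map hd usa) \<and>
      map length us = map length usa" unfolding isfact_def by blast
next
  fix L assume a: "isfact us s" "distinct s"
    "\<exists>us. concat us = s \<and> (\<forall>u\<in>set us. init_dom u) \<and> sorted_wrt (<) (map hd us) \<and> L = map length us"
  then obtain vs where "isfact vs s" "L = map length vs" unfolding isfact_def by blast
  thus "L = map length us" using isfact_unique a by blast
qed

lemma SC_snoc_max:
  assumes "distinct (xs @ m # ys)" "\<forall>x\<in>set xs. x < m" "\<forall>y\<in>set ys. y < m"
  shows "SC (xs @ m # ys) = SC xs @ [length ys + 1]"
proof -
  obtain us where us: "isfact us xs" using isfact_exists assms(1) by auto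
  have "init_dom (m # ys)" using assms(3) by (rule init_dom_Cons)
  moreover have "\<forall>h\<in>set (map hd us). h < m"
  proof
    fix h assume "h \<in> set (map hd us)"
    then obtain u where u: "u \<in> set us" "h = hd u" by auto
    hence "u \<noteq> []" using us by (auto simp: isfact_def dest: init_dom_ne)
    hence "h \<in> set u" using u by simp
    hence "h \<in> set (concat us)" using u by auto
    hence "h \<in> set xs" using us unfolding isfact_def by blast
    thus "h < m" using assms(2) by simp
  qed
  ultimately have "isfact (us @ [m # ys]) (xs @ m # ys)" using us
    by (auto simp: isfact_def sorted_wrt_append)
  hence "SC (xs @ m # ys) = map length (us @ [m # ys])" using SC_eq assms(1) by blast
  moreover have "SC xs = map length us" using SC_eq us assms(1) by simp
  ultimately show ?thesis by simp
qed

lemma sum_SC: "isfact us s \<Longrightarrow> sum_list (map length us) = length s"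
  unfolding isfact_def by (auto simp: length_concat)

lemma SC_comps: assumes "distinct s" shows "SC s \<in> comps (length s)"
proof -
  obtain us where us: "isfact us s" using isfact_exists assms by auto
  have "SC s = map length us" using SC_eq us assms by simp
  moreover have "0 \<notin> set (map length us)" using us by (auto simp: isfact_def dest: init_dom_ne)
  ultimately show ?thesis using sum_SC[OF us] by (simp add: comps_def)
qed

fun tk :: "nat list list \<Rightarrow> nat \<Rightarrow> nat list list" where
  "tk [] m = []"
| "tk (u # us) m = (if m = 0 then [] else if m \<le> length u then [take m u] else u # tk us (m - length u))"

lemma tk_concat: "\<forall>u\<in>set us. u \<noteq> [] \<Longrightarrow> concat (tk us m) = take m (concat us)"
  by (induction us arbitrary: m) (auto simp: take_append)

lemma tk_len: "map length (tk us m) = trunc (map length us) m"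
  by (induction us arbitrary: m) auto

lemma tk_idom: "\<forall>u\<in>set us. init_dom u \<Longrightarrow> \<forall>u\<in>set (tk us m). init_dom u"
proof (induction us arbitrary: m)
  case (Cons u us)
  have une: "u \<noteq> []" using Cons.prems by (auto dest: init_dom_ne)
  have idt: "init_dom (take m u)" if "m \<ge> 1" using that Cons.prems une
    unfolding init_dom_def by (auto simp: nth_take)
  show ?case using Cons.IH[of "m - length u"] Cons.prems idt by auto
qed simp

lemma tk_hd: "\<forall>u\<in>set us. u \<noteq> [] \<Longrightarrow> set (map hd (tk us m)) \<subseteq> set (map hd us)"
proof (induction us arbitrary: m)
  case (Cons u us)
  have hdt: "hd (take m u) = hd u" if "m \<ge> 1" using that Cons.prems by (cases u) auto
  show ?case using Cons.IH[of "m - length u"] Cons.prems hdt by auto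
qed simp

lemma tk_sorted: "\<forall>u\<in>set us. u \<noteq> [] \<Longrightarrow> sorted_wrt (<) (map hd us) \<Longrightarrow> sorted_wrt (<) (map hd (tk us m))"
proof (induction us arbitrary: m)
  case (Cons u us)
  have hdt: "hd (take m u) = hd u" if "m \<ge> 1" using that Cons.prems by (cases u) auto
  have s: "sorted_wrt (<) (map hd (tk us (m - length u)))" using Cons by simp
  have "set (map hd (tk us (m - length u))) \<subseteq> set (map hd us)"
    using tk_hd Cons.prems by simp
  thus ?case using Cons.prems s hdt by auto
qed simp

lemma SC_take: assumes "distinct s" shows "SC (take p s) = trunc (SC s) p"
proof -
  obtain us where us: "isfact us s" using isfact_exists assms by auto
  have idm: "\<forall>u\<in>set us. init_dom u" using us by (simp add: isfact_def)
  have ne: "\<forall>u\<in>set us. u \<noteq> []" using idm by (auto dest: init_dom_ne)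
  have "isfact (tk us p) (take p s)"
    using tk_concat[OF ne] tk_idom[OF idm] tk_sorted[OF ne] us by (auto simp: isfact_def)
  hence "SC (take p s) = map length (tk us p)" using SC_eq assms by simp
  also have "\<dots> = trunc (map length us) p" by (rule tk_len)
  also have "map length us = SC s" using SC_eq us assms by simp
  finally show ?thesis .
qed



definition bef :: "nat list \<Rightarrow> nat \<Rightarrow> nat \<Rightarrow> bool" where
  "bef s a b \<longleftrightarrow> (\<exists>p q. p < q \<and> q < length s \<and> s ! p = a \<and> s ! q = b)"

definition Rec :: "nat list \<Rightarrow> nat set" where
  "Rec s = {i. 1 \<le> i \<and> i < length s \<and> bef s (i + 1) i}"

lemma RC_Rec: "RC s = comp_of_des (length s) (Rec s)"
  by (simp add: RC_def Rec_def bef_def)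

lemma Rec_sub: "Rec s \<subseteq> {1..<length s}" by (auto simp: Rec_def)

lemma RC_comps: "RC s \<in> comps (length s)" "des (RC s) = Rec s"
  using comp_of_des[OF Rec_sub] by (simp_all add: RC_Rec)

lemma bef_Nil[simp]: "\<not> bef [] a b" by (simp add: bef_def)

lemma bef_Cons: "bef (x # xs) a b \<longleftrightarrow> (x = a \<and> b \<in> set xs) \<or> bef xs a b"
proof
  assume "bef (x # xs) a b"
  then obtain p q where pq: "p < q" "q < length (x # xs)" "(x # xs) ! p = a" "(x # xs) ! q = b"
    by (auto simp: bef_def)
  show "(x = a \<and> b \<in> set xs) \<or> bef xs a b"
  proof (cases p)
    case 0
    hence "x = a" using pq by simp
    moreover have "b = xs ! (q - 1)" using pq 0 by (cases q) auto
    moreover have "q - 1 < length xs" using pq 0 by auto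
    ultimately show ?thesis by auto
  next
    case (Suc p')
    then obtain q' where q: "q = Suc q'" using pq by (cases q) auto
    have "p' < q'" "q' < length xs" "xs ! p' = a" "xs ! q' = b" using pq Suc q by auto
    thus ?thesis unfolding bef_def by blast
  qed
next
  assume "(x = a \<and> b \<in> set xs) \<or> bef xs a b"
  thus "bef (x # xs) a b"
  proof
    assume h: "x = a \<and> b \<in> set xs"
    then obtain j where "j < length xs" "xs ! j = b" by (auto simp: in_set_conv_nth)
    hence "0 < Suc j" "Suc j < length (x # xs)" "(x # xs) ! 0 = a" "(x # xs) ! Suc j = b"
      using h by auto
    thus ?thesis unfolding bef_def by blast
  next
    assume "bef xs a b"
    then obtain p q where "p < q" "q < length xs" "xs ! p = a" "xs ! q = b" by (auto simp: bef_def)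
    hence "Suc p < Suc q" "Suc q < length (x # xs)" "(x # xs) ! Suc p = a" "(x # xs) ! Suc q = b"
      by auto
    thus ?thesis unfolding bef_def by blast
  qed
qed

lemma bef_mem: "bef xs a b \<Longrightarrow> a \<in> set xs \<and> b \<in> set xs"
  by (induction xs) (auto simp: bef_Cons)

lemma bef_append: "bef (xs @ ys) a b \<longleftrightarrow> bef xs a b \<or> bef ys a b \<or> (a \<in> set xs \<and> b \<in> set ys)"
  by (induction xs) (auto simp: bef_Cons)

lemma bef_filter: "P a \<Longrightarrow> P b \<Longrightarrow> bef (filter P xs) a b \<longleftrightarrow> bef xs a b"
  by (induction xs) (auto simp: bef_Cons)

lemma bef_trans: assumes "distinct xs" "bef xs a b" "bef xs b c" shows "bef xs a c"
proof -
  obtain p q where 1: "p < q" "q < length xs" "xs ! p = a" "xs ! q = b" using assms(2) by (auto simp: bef_def)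
  obtain q' r where 2: "q' < r" "r < length xs" "xs ! q' = b" "xs ! r = c" using assms(3) by (auto simp: bef_def)
  have "q = q'" using 1 2 assms(1) nth_eq_iff_index_eq by fastforce
  thus ?thesis using 1 2 unfolding bef_def by (intro exI[of _ p] exI[of _ r]) auto
qed

lemma bef_asym: assumes "distinct xs" "bef xs a b" shows "\<not> bef xs b a"
proof
  assume "bef xs b a"
  obtain p q where 1: "p < q" "q < length xs" "xs ! p = a" "xs ! q = b" using assms(2) by (auto simp: bef_def)
  obtain q' r where 2: "q' < r" "r < length xs" "xs ! q' = b" "xs ! r = a" using \<open>bef xs b a\<close> by (auto simp: bef_def)
  have "q = q'" using 1 2 assms(1) nth_eq_iff_index_eq by fastforce
  moreover have "p = r" using 1 2 assms(1) nth_eq_iff_index_eq by fastforce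
  ultimately show False using 1 2 by simp
qed

lemma bef_rev_upt: "bef (rev [a..<b]) x y \<longleftrightarrow> a \<le> y \<and> y < x \<and> x < b"
proof (induction b)
  case 0 thus ?case by simp
next
  case (Suc b)
  show ?case
  proof (cases "a \<le> b")
    case True
    hence "rev [a..<Suc b] = b # rev [a..<b]" by simp
    thus ?thesis using Suc by (auto simp: bef_Cons)
  next
    case False
    thus ?thesis by simp
  qed
qed

lemma perms_len: "s \<in> perms n \<Longrightarrow> length s = n"
  unfolding perms_def using distinct_card by fastforce

lemma Rec_append:
  assumes "distinct (xs @ ys)" "set xs = {1..q}" "\<forall>y\<in>set ys. q < y"
  shows "Rec (xs @ ys) = Rec xs \<union> {i. q < i \<and> i < length (xs @ ys) \<and> bef ys (i + 1) i}"
proof -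
  have lx: "length xs = q" using assms distinct_card[of xs] by simp
  have "i \<in> Rec (xs @ ys) \<longleftrightarrow> i \<in> Rec xs \<or> (q < i \<and> i < length (xs @ ys) \<and> bef ys (i + 1) i)" for i
  proof (cases "i < q")
    case True
    show ?thesis
    proof (cases "1 \<le> i")
      case False thus ?thesis by (auto simp: Rec_def)
    next
      case i1: True
      have "i \<in> set xs" "i + 1 \<in> set xs" using assms(2) True i1 by auto
      hence "i \<notin> set ys" "i + 1 \<notin> set ys" using assms(1) by auto
      hence "\<not> bef ys (i+1) i" using bef_mem by blast
      thus ?thesis using True lx \<open>i \<notin> set ys\<close> by (auto simp: Rec_def bef_append)
    qed
  next
    case False
    hence "i \<notin> set xs \<or> i = q" using assms(2) by auto
    show ?thesis
    proof (cases "i = q")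
      case True
      have "i + 1 \<notin> set xs" using assms(2) True by auto
      hence "\<not> bef xs (i+1) i" using bef_mem by blast
      moreover have "\<not> bef ys (i+1) i" using bef_mem assms(3) True by fastforce
      moreover have "i \<notin> set ys" using assms(3) True by auto
      ultimately show ?thesis using True lx \<open>i + 1 \<notin> set xs\<close> by (auto simp: Rec_def bef_append)
    next
      case False
      hence "i \<notin> set xs" "i + 1 \<notin> set xs" using assms(2) \<open>\<not> i < q\<close> by auto
      hence "\<not> bef xs (i+1) i" using bef_mem by blast
      thus ?thesis using False \<open>\<not> i < q\<close> lx \<open>i \<notin> set xs\<close> \<open>i + 1 \<notin> set xs\<close>
        by (auto simp: Rec_def bef_append)
    qed
  qed
  thus ?thesis by blast
qed



definition wt :: "nat set \<Rightarrow> nat" where "wt X = (\<Sum>i\<in>X. 2 ^ i)"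

lemma wt_small: "wt {1..q} < 2 ^ (q + 1)"
proof (induction q)
  case 0 thus ?case by (simp add: wt_def)
next
  case (Suc q)
  have "{1..Suc q} = insert (Suc q) {1..q}" by auto
  hence "wt {1..Suc q} = 2 ^ Suc q + wt {1..q}" by (simp add: wt_def)
  thus ?case using Suc by simp
qed

lemma perm_split:
  assumes "s \<in> perms N" "N > 0"
  obtains xs ys where "s = xs @ N # ys" "distinct xs" "distinct ys" "N \<notin> set xs" "N \<notin> set ys"
    "set xs \<inter> set ys = {}" "\<forall>x\<in>set xs. 1 \<le> x \<and> x < N" "\<forall>x\<in>set ys. 1 \<le> x \<and> x < N"
    "length xs + length ys + 1 = N"
proof -
  have ds: "distinct s" and ss: "set s = {1..N}" using assms by (auto simp: perms_def)
  have "N \<in> set s" using ss assms by auto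
  then obtain xs ys where s: "s = xs @ N # ys" by (meson split_list)
  have "\<forall>x\<in>set xs. 1 \<le> x \<and> x \<le> N" "\<forall>x\<in>set ys. 1 \<le> x \<and> x \<le> N" using ss s by auto
  moreover have "N \<notin> set xs" "N \<notin> set ys" using ds s by auto
  ultimately have "\<forall>x\<in>set xs. 1 \<le> x \<and> x < N" "\<forall>x\<in>set ys. 1 \<le> x \<and> x < N"
    using le_neq_implies_less by blast+
  moreover have "length xs + length ys + 1 = N" using perms_len[OF assms(1)] s by simp
  ultimately show ?thesis using that s ds \<open>N \<notin> set xs\<close> \<open>N \<notin> set ys\<close> by auto
qed

lemma des_SC_snoc:
  assumes "distinct xs" "length xs = q"
  shows "des (SC xs @ [a]) = (if xs = [] then {} else insert q (des (SC xs)))"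
proof -
  have c: "SC xs \<in> comps q" using SC_comps[OF assms(1)] assms(2) by simp
  have "SC xs = [] \<longleftrightarrow> xs = []"
  proof
    assume "SC xs = []" thus "xs = []" using c assms(2) by (auto simp: comps_def)
  next
    assume "xs = []" thus "SC xs = []" using c assms(2) comps0 by auto
  qed
  moreover have "sum_list (SC xs) = q" using c by (simp add: comps_def)
  ultimately show ?thesis by (simp add: des_snoc)
qed

lemma tri:
  "s \<in> perms N \<Longrightarrow> Rec s = {1..<N} - des (SC s) \<or> wt (Rec s) < wt ({1..<N} - des (SC s))"
proof (induction N arbitrary: s rule: less_induct)
  case (less N)
  show ?case
  proof (cases "N = 0")
    case True
    hence "s = []" using perms_len[OF less.prems] by simp
    thus ?thesis using True by (simp add: Rec_def)
  next
    case False
    obtain xs ys where s: "s = xs @ N # ys" and dx: "distinct xs" and dy: "distinct ys"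
      and nx: "N \<notin> set xs" and ny: "N \<notin> set ys" and dxy: "set xs \<inter> set ys = {}"
      and rx: "\<forall>x\<in>set xs. 1 \<le> x \<and> x < N" and ry: "\<forall>x\<in>set ys. 1 \<le> x \<and> x < N"
      and ln: "length xs + length ys + 1 = N"
      using perm_split[OF less.prems] False by blast
    define q where "q = length xs"
    have ds: "distinct s" using less.prems by (simp add: perms_def)
    have qN: "q < N" using ln q_def by simp
    have SCs: "SC s = SC xs @ [length ys + 1]" unfolding s
      using ds s rx ry by (intro SC_snoc_max) auto
    have desS: "des (SC s) = (if xs = [] then {} else insert q (des (SC xs)))"
      unfolding SCs using des_SC_snoc dx q_def by simp
    have cx: "SC xs \<in> comps q" using SC_comps[OF dx] q_def by simp
    have dsub: "des (SC xs) \<subseteq> {1..<q}" using des_sub[OF cx] .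
    have Tform: "{1..<N} - des (SC s) = ({1..<q} - des (SC xs)) \<union> {q+1..<N}"
    proof (cases "xs = []")
      case True
      hence "q = 0" "des (SC xs) = {}" using q_def dsub by auto
      thus ?thesis using desS True by auto
    next
      case False
      thus ?thesis using desS dsub qN by force
    qed
    have Rs: "Rec s \<subseteq> {1..<N}" using Rec_sub[of s] perms_len[OF less.prems] by simp
    show ?thesis
    proof (cases "\<forall>i. q < i \<and> i < N \<longrightarrow> bef s (i + 1) i")
      case True
      have chain: "\<forall>t. t < N - q - 1 \<longrightarrow> bef s N (N - 1 - t)"
      proof (intro allI impI)
        fix t assume "t < N - q - 1"
        thus "bef s N (N - 1 - t)"
        proof (induction t)
          case 0
          thus ?case using True[rule_format, of "N - 1"] qN by simp
        next
          case (Suc t)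
          hence "bef s N (N - 1 - t)" by simp
          moreover have "bef s (N - 1 - t) (N - 1 - Suc t)"
            using True[rule_format, of "N - 1 - Suc t"] Suc.prems
            by (simp add: Suc_diff_Suc)
          ultimately show ?case using bef_trans ds by blast
        qed
      qed
      have sub: "{q+1..<N} \<subseteq> set ys"
      proof
        fix i assume i: "i \<in> {q+1..<N}"
        hence "bef s N i" using chain[rule_format, of "N - 1 - i"] by auto
        hence "bef xs N i \<or> bef (N # ys) N i \<or> (N \<in> set xs \<and> i \<in> set (N # ys))"
          unfolding s by (simp add: bef_append)
        hence "bef (N # ys) N i" using nx bef_mem by blast
        hence "i \<in> set ys \<or> bef ys N i" by (simp add: bef_Cons)
        thus "i \<in> set ys" using ny bef_mem by blast
      qed
      have "card (set ys) = length ys" using dy by (simp add: distinct_card)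
      hence "card {q+1..<N} = card (set ys)" using ln q_def by simp
      hence sy: "set ys = {q+1..<N}" using card_subset_eq[OF finite_set sub] by simp
      have "set s = {1..N}" using less.prems by (simp add: perms_def)
      hence "set xs = {1..N} - insert N (set ys)" using s dxy nx by auto
      hence sx: "set xs = {1..q}" using sy qN by auto
      have xp: "xs \<in> perms q" using dx sx by (simp add: perms_def)
      have IH: "Rec xs = {1..<q} - des (SC xs) \<or> wt (Rec xs) < wt ({1..<q} - des (SC xs))"
        using less.IH[OF qN xp] .
      have "\<forall>y\<in>set (N # ys). q < y" using sy qN by auto
      hence "Rec s = Rec xs \<union> {i. q < i \<and> i < length s \<and> bef (N # ys) (i + 1) i}"
        unfolding s using Rec_append[of xs "N # ys" q] ds s sx by simp
      also have "{i. q < i \<and> i < length s \<and> bef (N # ys) (i + 1) i} = {q+1..<N}"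
      proof -
        have "bef (N # ys) (i + 1) i \<longleftrightarrow> bef s (i + 1) i" if "q < i" "i < N" for i
          unfolding s using that sx by (auto simp: bef_append dest: bef_mem)
        thus ?thesis using True perms_len[OF less.prems] by auto
      qed
      finally have Rf: "Rec s = Rec xs \<union> {q+1..<N}" .
      have Rx: "Rec xs \<subseteq> {1..<q}" using Rec_sub[of xs] q_def by simp
      show ?thesis
      proof (cases "Rec xs = {1..<q} - des (SC xs)")
        case True thus ?thesis using Rf Tform by simp
      next
        case False
        hence lt: "wt (Rec xs) < wt ({1..<q} - des (SC xs))" using IH by simp
        have "wt (Rec s) = wt (Rec xs) + wt {q+1..<N}" unfolding Rf wt_def
          using Rx by (intro sum.union_disjoint) (auto intro: finite_subset)
        moreover have "wt ({1..<N} - des (SC s)) = wt ({1..<q} - des (SC xs)) + wt {q+1..<N}"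
          unfolding Tform wt_def by (intro sum.union_disjoint) auto
        ultimately show ?thesis using lt by simp
      qed
    next
      case False
      then obtain i where i: "q < i" "i < N" "\<not> bef s (i + 1) i" by blast
      have "i \<notin> Rec s" using i by (simp add: Rec_def)
      hence "Rec s \<subseteq> {1..<N} - {i}" using Rs by blast
      hence "wt (Rec s) \<le> wt ({1..<N} - {i})" unfolding wt_def by (intro sum_mono2) auto
      also have "{1..<N} - {i} = {1..q} \<union> ({q+1..<N} - {i})" using i by auto
      also have "wt \<dots> = wt {1..q} + wt ({q+1..<N} - {i})" unfolding wt_def
        by (intro sum.union_disjoint) auto
      also have "\<dots> < 2 ^ i + wt ({q+1..<N} - {i})"
      proof -
        have "wt {1..q} < 2 ^ (q+1)" by (rule wt_small)
        also have "(2::nat) ^ (q+1) \<le> 2 ^ i" using i by (intro power_increasing) auto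
        finally show ?thesis by simp
      qed
      also have "\<dots> = wt {q+1..<N}" unfolding wt_def using i
        by (subst sum.remove[of _ i]) auto
      also have "\<dots> \<le> wt ({1..<N} - des (SC s))" unfolding Tform wt_def
        by (intro sum_mono2) auto
      finally show ?thesis by simp
    qed
  qed
qed

lemma SC_Nil[simp]: "SC [] = []"
  using SC_comps[of "[]"] comps0 by simp

lemma layered:
  "I \<in> comps N \<Longrightarrow> \<exists>s\<in>perms N. SC s = I \<and> Rec s = {1..<N} - des I"
proof (induction I arbitrary: N rule: rev_induct)
  case Nil
  hence "N = 0" by (simp add: comps_def)
  thus ?case by (intro bexI[of _ "[]"]) (auto simp: perms_def Rec_def comps_def)
next
  case (snoc a I)
  define M where "M = N - a"
  have IM: "I \<in> comps M" and a: "a > 0" "a \<le> N" using snoc.prems by (auto simp: comps_snoc M_def)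
  obtain s' where s': "s' \<in> perms M" "SC s' = I" "Rec s' = {1..<M} - des I"
    using snoc.IH[OF IM] by blast
  have MN: "M < N" using a M_def by simp
  define ys where "ys = rev [M+1..<N]"
  define s where "s = s' @ N # ys"
  have ds': "distinct s'" and ss': "set s' = {1..M}" using s'(1) by (auto simp: perms_def)
  have ls': "length s' = M" using perms_len[OF s'(1)] .
  have sy: "set ys = {M+1..<N}" by (simp add: ys_def)
  have Nys: "N # ys = rev [M+1..<N+1]" using MN by (simp add: ys_def)
  have ds: "distinct s" unfolding s_def using ds' ss' sy MN by (auto simp: ys_def)
  have ss: "set s = {1..N}" unfolding s_def using ss' sy MN by auto
  have sp: "s \<in> perms N" using ds ss by (simp add: perms_def)
  have "SC s = SC s' @ [length ys + 1]" unfolding s_def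
    using ds ss' sy MN s_def by (intro SC_snoc_max) auto
  also have "length ys + 1 = a" using MN M_def a by (simp add: ys_def)
  finally have SCs: "SC s = I @ [a]" using s'(2) by simp
  have "\<forall>y\<in>set (N # ys). M < y" using sy MN by auto
  hence "Rec s = Rec s' \<union> {i. M < i \<and> i < length s \<and> bef (N # ys) (i + 1) i}"
    unfolding s_def using Rec_append[of s' "N # ys" M] ds s_def ss' by simp
  also have "{i. M < i \<and> i < length s \<and> bef (N # ys) (i + 1) i} = {M+1..<N}"
    using perms_len[OF sp] unfolding Nys bef_rev_upt by auto
  finally have Rs: "Rec s = ({1..<M} - des I) \<union> {M+1..<N}" using s'(3) by simp
  have dI: "des (I @ [a]) = (if I = [] then {} else insert M (des I))"
    using des_snoc IM by (simp add: comps_def)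
  have dsub: "des I \<subseteq> {1..<M}" using des_sub[OF IM] .
  have "{1..<N} - des (I @ [a]) = ({1..<M} - des I) \<union> {M+1..<N}"
  proof (cases "I = []")
    case True
    hence "M = 0" using IM by (simp add: comps_def)
    thus ?thesis using True dI by auto
  next
    case False
    thus ?thesis using dI dsub MN by force
  qed
  thus ?case using sp SCs Rs by blast
qed



lemma finite_perms: "finite (perms n)"
proof -
  have "perms n \<subseteq> {xs. set xs \<subseteq> {1..n} \<and> length xs \<le> n}"
    using perms_len by (auto simp: perms_def)
  thus ?thesis by (rule finite_subset) (rule finite_lists_length_le, simp)
qed

definition pr :: "nat list \<Rightarrow> sym \<Rightarrow> rat" where
  "pr J x = (\<Sum>s\<in>{s \<in> perms (sum_list J). SC s = J}. x (RC s))"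

lemma RC_perm: "s \<in> perms N \<Longrightarrow> RC s \<in> comps N" "s \<in> perms N \<Longrightarrow> des (RC s) = Rec s"
  using RC_comps[of s] perms_len[of s N] by auto

lemma pr_group:
  assumes "sum_list J = N"
  shows "pr J x = (\<Sum>K\<in>comps N. of_nat (card {s \<in> perms N. SC s = J \<and> RC s = K}) * x K)"
proof -
  let ?A = "{s \<in> perms N. SC s = J}"
  have fA: "finite ?A" using finite_perms by simp
  have "pr J x = (\<Sum>K\<in>comps N. \<Sum>s\<in>{s \<in> ?A. RC s = K}. x (RC s))"
    unfolding pr_def assms
    by (rule sum.group[symmetric]) (use fA finite_comps RC_perm in auto)
  also have "\<dots> = (\<Sum>K\<in>comps N. of_nat (card {s \<in> perms N. SC s = J \<and> RC s = K}) * x K)"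
  proof (rule sum.cong[OF refl])
    fix K
    have "(\<Sum>s\<in>{s \<in> ?A. RC s = K}. x (RC s)) = (\<Sum>s\<in>{s \<in> ?A. RC s = K}. x K)"
      by (rule sum.cong) auto
    also have "\<dots> = of_nat (card {s \<in> ?A. RC s = K}) * x K" by simp
    also have "{s \<in> ?A. RC s = K} = {s \<in> perms N. SC s = J \<and> RC s = K}" by auto
    finally show "(\<Sum>s\<in>{s \<in> ?A. RC s = K}. x (RC s)) =
      of_nat (card {s \<in> perms N. SC s = J \<and> RC s = K}) * x K" by simp
  qed
  finally show ?thesis .
qed

lemma pairU_conj:
  assumes "J \<in> comps N"
  shows "pairU (conj J) x = pr J x"
proof -
  have c: "conj J \<in> comps N" "conj (conj J) = J" using conj_props[OF assms] by auto
  have s: "sum_list (conj J) = N" "sum_list J = N" using c(1) assms by (auto simp: comps_def)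
  show ?thesis unfolding pairU_def pr_group[OF s(2)] s(1) ucoef_def c(2) by simp
qed

lemma tri':
  assumes "J \<in> comps N" "s \<in> perms N" "SC s = J"
  shows "RC s = conj J \<or> wt (des (RC s)) < wt (des (conj J))"
proof -
  have dc: "des (conj J) = {1..<N} - des J" using conj_props[OF assms(1)] by simp
  have "Rec s = des (conj J) \<or> wt (Rec s) < wt (des (conj J))"
    using tri[OF assms(2)] assms(3) dc by simp
  moreover have "Rec s = des (conj J) \<Longrightarrow> RC s = conj J"
    using RC_perm[OF assms(2)] conj_props[OF assms(1)] des_inj by metis
  ultimately show ?thesis using RC_perm[OF assms(2)] by auto
qed

lemma diag:
  assumes "J \<in> comps N"
  shows "\<exists>s\<in>perms N. SC s = J \<and> RC s = conj J"
proof -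
  obtain s where s: "s \<in> perms N" "SC s = J" "Rec s = {1..<N} - des J" using layered[OF assms] by blast
  have "des (RC s) = des (conj J)" using RC_perm[OF s(1)] s(3) conj_props[OF assms] by simp
  hence "RC s = conj J" using des_inj RC_perm[OF s(1)] conj_props[OF assms] by metis
  thus ?thesis using s by blast
qed

lemma diag_card:
  assumes "J \<in> comps N"
  shows "card {s \<in> perms N. SC s = J \<and> RC s = conj J} \<ge> 1"
proof -
  obtain s where "s \<in> {s \<in> perms N. SC s = J \<and> RC s = conj J}" using diag[OF assms] by blast
  moreover have "finite {s \<in> perms N. SC s = J \<and> RC s = conj J}" using finite_perms by simp
  ultimately show ?thesis by (metis One_nat_def Suc_leI card_gt_0_iff empty_iff)
qed

lemma pr_split:
  assumes "J \<in> comps N"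
  shows "pr J x = of_nat (card {s \<in> perms N. SC s = J \<and> RC s = conj J}) * x (conj J)
     + (\<Sum>s\<in>{s \<in> perms N. SC s = J \<and> RC s \<noteq> conj J}. x (RC s))"
proof -
  have sN: "sum_list J = N" using assms by (simp add: comps_def)
  let ?A = "{s \<in> perms N. SC s = J}"
  have fA: "finite ?A" using finite_perms by simp
  have "pr J x = (\<Sum>s\<in>{s\<in>?A. RC s = conj J} \<union> {s\<in>?A. RC s \<noteq> conj J}. x (RC s))"
    unfolding pr_def sN by (rule sum.cong) auto
  also have "\<dots> = (\<Sum>s\<in>{s\<in>?A. RC s = conj J}. x (RC s)) + (\<Sum>s\<in>{s\<in>?A. RC s \<noteq> conj J}. x (RC s))"
    by (rule sum.union_disjoint) (use finite_perms in auto)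
  also have "(\<Sum>s\<in>{s\<in>?A. RC s = conj J}. x (RC s)) = (\<Sum>s\<in>{s\<in>?A. RC s = conj J}. x (conj J))"
    by (rule sum.cong) auto
  also have "{s\<in>?A. RC s = conj J} = {s \<in> perms N. SC s = J \<and> RC s = conj J}" by auto
  also have "{s\<in>?A. RC s \<noteq> conj J} = {s \<in> perms N. SC s = J \<and> RC s \<noteq> conj J}" by auto
  finally show ?thesis by simp
qed

lemma uniq:
  assumes supp: "\<forall>K. K \<notin> comps N \<longrightarrow> x K = 0" and pz: "\<forall>J\<in>comps N. pr J x = 0"
  shows "x K = 0"
proof (cases "K \<in> comps N")
  case False thus ?thesis using supp by simp
next
  case True
  thus ?thesis
  proof (induction "wt (des K)" arbitrary: K rule: less_induct)
    case less
    define J where "J = conj K"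
    have J: "J \<in> comps N" "conj J = K" using conj_props[OF less.prems] by (auto simp: J_def)
    have "(\<Sum>s\<in>{s \<in> perms N. SC s = J \<and> RC s \<noteq> conj J}. x (RC s)) = 0"
    proof (rule sum.neutral, intro ballI)
      fix s assume s: "s \<in> {s \<in> perms N. SC s = J \<and> RC s \<noteq> conj J}"
      hence "wt (des (RC s)) < wt (des K)" using tri'[OF J(1)] J(2) by auto
      thus "x (RC s) = 0" using less.hyps RC_perm s by auto
    qed
    hence "of_nat (card {s \<in> perms N. SC s = J \<and> RC s = conj J}) * x K = 0"
      using pr_split[OF J(1), of x] pz J by simp
    moreover have "card {s \<in> perms N. SC s = J \<and> RC s = conj J} \<noteq> 0"
      using diag_card[OF J(1)] by simp
    ultimately show ?case by simp
  qed
qed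

lemma exist_step:
  "\<exists>v. (\<forall>K. K \<notin> comps N \<longrightarrow> v K = 0) \<and>
     (\<forall>J\<in>comps N. wt (des (conj J)) < w \<longrightarrow> pr J v = d J)"
proof (induction w)
  case 0 thus ?case by (intro exI[of _ "\<lambda>_. 0"]) simp
next
  case (Suc w)
  then obtain v where v: "\<forall>K. K \<notin> comps N \<longrightarrow> v K = 0"
    "\<forall>J\<in>comps N. wt (des (conj J)) < w \<longrightarrow> pr J v = d J" by blast
  define c where "c K = (of_nat (card {s \<in> perms N. SC s = conj K \<and> RC s = K}) :: rat)" for K
  define r where "r K = (\<Sum>s\<in>{s \<in> perms N. SC s = conj K \<and> RC s \<noteq> K}. v (RC s))" for K
  define v' where "v' K = (if K \<in> comps N \<and> wt (des K) = w then (d (conj K) - r K) / c K else v K)" for K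
  have low: "v' K = v K" if "wt (des K) < w" for K using that by (simp add: v'_def)
  have "pr J v' = d J" if J: "J \<in> comps N" "wt (des (conj J)) < Suc w" for J
  proof -
    define K where "K = conj J"
    have K: "K \<in> comps N" "conj K = J" using conj_props[OF J(1)] by (auto simp: K_def)
    have rest: "(\<Sum>s\<in>{s \<in> perms N. SC s = J \<and> RC s \<noteq> K}. v' (RC s)) =
        (\<Sum>s\<in>{s \<in> perms N. SC s = J \<and> RC s \<noteq> K}. v (RC s))"
    proof (rule sum.cong[OF refl])
      fix s assume s: "s \<in> {s \<in> perms N. SC s = J \<and> RC s \<noteq> K}"
      hence "wt (des (RC s)) < wt (des K)" using tri'[OF J(1)] K_def by auto
      thus "v' (RC s) = v (RC s)" using low J(2) K_def by simp
    qed
    show ?thesis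
    proof (cases "wt (des K) < w")
      case True
      have "pr J v' = of_nat (card {s \<in> perms N. SC s = J \<and> RC s = K}) * v' K
          + (\<Sum>s\<in>{s \<in> perms N. SC s = J \<and> RC s \<noteq> K}. v' (RC s))"
        using pr_split[OF J(1)] K_def by simp
      also have "\<dots> = pr J v" using pr_split[OF J(1), of v] K_def rest low[OF True] by simp
      also have "\<dots> = d J" using v(2) J(1) True K_def by simp
      finally show ?thesis .
    next
      case False
      hence w: "wt (des K) = w" using J(2) K_def by simp
      have cpos: "c K \<noteq> 0" using diag_card[OF J(1)] K K_def unfolding c_def by simp
      have "pr J v' = c K * v' K + r K"
        using pr_split[OF J(1), of v'] K_def K rest unfolding c_def r_def by simp
      also have "v' K = (d J - r K) / c K" using w K by (simp add: v'_def)
      finally show ?thesis using cpos by simp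
    qed
  qed
  moreover have "\<forall>K. K \<notin> comps N \<longrightarrow> v' K = 0" using v(1) by (simp add: v'_def)
  ultimately show ?case by blast
qed

lemma exist:
  "\<exists>v. (\<forall>K. K \<notin> comps N \<longrightarrow> v K = 0) \<and> (\<forall>J\<in>comps N. pr J v = d J)"
proof -
  define W where "W = Suc (\<Sum>K\<in>comps N. wt (des K))"
  obtain v where v: "\<forall>K. K \<notin> comps N \<longrightarrow> v K = 0"
    "\<forall>J\<in>comps N. wt (des (conj J)) < W \<longrightarrow> pr J v = d J" using exist_step by blast
  have "wt (des (conj J)) < W" if "J \<in> comps N" for J
  proof -
    have "conj J \<in> comps N" using conj_props[OF that] by simp
    hence "wt (des (conj J)) \<le> (\<Sum>K\<in>comps N. wt (des K))"
      using finite_comps by (intro member_le_sum) auto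
    thus ?thesis unfolding W_def by simp
  qed
  thus ?thesis using v by blast
qed

lemma pr_diff: "pr J (\<lambda>K. x K - y K) = pr J x - pr J y"
  unfolding pr_def by (simp add: sum_subtractf)

lemma Vp_char:
  assumes "I \<in> comps n"
  shows "\<forall>K. K \<notin> comps n \<longrightarrow> Vp I K = 0" "\<forall>J\<in>comps n. pr J (Vp I) = (if J = I then 1 else 0)"
proof -
  let ?Q = "\<lambda>v. (\<forall>K. K \<notin> comps n \<longrightarrow> v K = 0) \<and> (\<forall>J\<in>comps n. pr J v = (if J = I then 1 else 0))"
  have cI: "conj I \<in> comps n" "sum_list (conj I) = n" using conj_props[OF assms] by (auto simp: comps_def)
  have eq: "(\<forall>J\<in>comps n. pairU J v = (if J = conj I then 1 else 0)) \<longleftrightarrow>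
            (\<forall>J\<in>comps n. pr J v = (if J = I then 1 else 0))" for v
  proof
    assume h: "\<forall>J\<in>comps n. pairU J v = (if J = conj I then 1 else 0)"
    show "\<forall>J\<in>comps n. pr J v = (if J = I then 1 else 0)"
    proof
      fix J assume J: "J \<in> comps n"
      have "pr J v = pairU (conj J) v" using pairU_conj[OF J] by simp
      also have "\<dots> = (if conj J = conj I then 1 else 0)" using h conj_props[OF J] by simp
      also have "(conj J = conj I) = (J = I)" using conj_props[OF J] conj_props[OF assms] by metis
      finally show "pr J v = (if J = I then 1 else 0)" .
    qed
  next
    assume h: "\<forall>J\<in>comps n. pr J v = (if J = I then 1 else 0)"
    show "\<forall>J\<in>comps n. pairU J v = (if J = conj I then 1 else 0)"
    proof
      fix J assume J: "J \<in> comps n"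
      have cJ: "conj J \<in> comps n" "conj (conj J) = J" using conj_props[OF J] by auto
      have "pairU J v = pr (conj J) v" using pairU_conj[OF cJ(1)] cJ(2) by simp
      also have "\<dots> = (if conj J = I then 1 else 0)" using h cJ by simp
      also have "(conj J = I) = (J = conj I)" using cJ conj_props[OF assms] by metis
      finally show "pairU J v = (if J = conj I then 1 else 0)" .
    qed
  qed
  obtain v where v: "?Q v" using exist[of n "\<lambda>J. if J = I then 1 else 0"] by blast
  have un: "w = v" if w: "?Q w" for w
  proof
    fix K
    show "w K = v K"
      using uniq[of n "\<lambda>K. w K - v K" K] w v by (simp add: pr_diff)
  qed
  have "Vp I = v" unfolding Vp_def V_def cI(2)
  proof (rule the_equality)
    show "(\<forall>K. K \<notin> comps n \<longrightarrow> v K = 0) \<and> (\<forall>J\<in>comps n. pairU J v = (if J = conj I then 1 else 0))"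
      using v eq by blast
  next
    fix w assume "(\<forall>K. K \<notin> comps n \<longrightarrow> w K = 0) \<and> (\<forall>J\<in>comps n. pairU J w = (if J = conj I then 1 else 0))"
    thus "w = v" using un eq by blast
  qed
  thus "\<forall>K. K \<notin> comps n \<longrightarrow> Vp I K = 0" "\<forall>J\<in>comps n. pr J (Vp I) = (if J = I then 1 else 0)"
    using v by auto
qed



lemma filter_perm:
  assumes "s \<in> perms N" "n \<le> N"
  shows "filter (\<lambda>x. x \<le> n) s \<in> perms n"
  using assms by (auto simp: perms_def)

lemma Rec_filter:
  assumes "s \<in> perms N" "n \<le> N"
  shows "Rec (filter (\<lambda>x. x \<le> n) s) = Rec s \<inter> {1..<n}"
proof -
  have l: "length (filter (\<lambda>x. x \<le> n) s) = n" using perms_len filter_perm[OF assms] by blast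
  have lN: "length s = N" using perms_len assms(1) by blast
  have "i \<in> Rec (filter (\<lambda>x. x \<le> n) s) \<longleftrightarrow> i \<in> Rec s \<inter> {1..<n}" for i
  proof (cases "i < n")
    case True
    hence "bef (filter (\<lambda>x. x \<le> n) s) (i + 1) i \<longleftrightarrow> bef s (i + 1) i"
      by (intro bef_filter) auto
    thus ?thesis using True l lN assms(2) by (auto simp: Rec_def)
  next
    case False thus ?thesis using l by (auto simp: Rec_def)
  qed
  thus ?thesis by blast
qed

lemma bef_chain:
  assumes "distinct xs" "\<forall>c. a \<le> c \<and> c < b \<longrightarrow> bef xs (c + 1) c" "a < b"
  shows "bef xs b a"
  using assms(2,3)
proof (induction b)
  case 0 thus ?case by simp
next
  case (Suc b)
  show ?case
  proof (cases "a = b")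
    case True thus ?thesis using Suc.prems by auto
  next
    case False
    hence "bef xs b a" using Suc by auto
    moreover have "bef xs (Suc b) b" using Suc.prems by auto
    ultimately show ?thesis using bef_trans assms(1) by blast
  qed
qed

lemma topdec_iff:
  assumes "s \<in> perms N" "n \<le> N"
  shows "filter (\<lambda>x. n < x) s = rev [n+1..<N+1] \<longleftrightarrow> {n+1..<N} \<subseteq> Rec s"
proof
  assume h: "filter (\<lambda>x. n < x) s = rev [n+1..<N+1]"
  show "{n+1..<N} \<subseteq> Rec s"
  proof
    fix i assume i: "i \<in> {n+1..<N}"
    have "bef (rev [n+1..<N+1]) (i + 1) i" unfolding bef_rev_upt using i by simp
    hence b: "bef (filter (\<lambda>x. n < x) s) (i + 1) i" using h by simp
    have "n < i + 1" "n < i" using i by auto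
    hence "bef s (i + 1) i" using b bef_filter[of "\<lambda>x. n < x" "i + 1" i s] by simp
    moreover have "i < length s" using i perms_len[OF assms(1)] by simp
    moreover have "1 \<le> i" using i by simp
    ultimately show "i \<in> Rec s" by (simp add: Rec_def)
  qed
next
  assume h: "{n+1..<N} \<subseteq> Rec s"
  define f where "f = filter (\<lambda>x. n < x) s"
  have df: "distinct f" using assms(1) by (simp add: f_def perms_def)
  have "set s = {1..N}" using assms(1) by (simp add: perms_def)
  hence sf: "set f = {n+1..N}" unfolding f_def by auto
  have bf: "bef f (c + 1) c" if c: "n < c" "c < N" for c
  proof -
    have "c \<in> {n+1..<N}" using c by simp
    hence "c \<in> Rec s" using h by blast
    hence b: "bef s (c + 1) c" by (simp add: Rec_def)
    have "n < c + 1" using c by simp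
    thus ?thesis unfolding f_def using b c(1) bef_filter[of "\<lambda>x. n < x" "c + 1" c s] by simp
  qed
  have "sorted_wrt (\<lambda>x y. y < x) f"
    unfolding sorted_wrt_iff_nth_less
  proof (intro allI impI)
    fix i j assume ij: "i < j" "j < length f"
    have mi: "f ! i \<in> set f" using ij by simp
    have mj: "f ! j \<in> set f" using ij by simp
    have ne: "f ! i \<noteq> f ! j" using df ij by (simp add: nth_eq_iff_index_eq)
    have bij: "bef f (f ! i) (f ! j)" unfolding bef_def using ij by blast
    show "f ! j < f ! i"
    proof (rule ccontr)
      assume "\<not> f ! j < f ! i"
      hence lt: "f ! i < f ! j" using ne by simp
      have lo: "n < f ! i" using mi sf by simp
      have hi: "f ! j \<le> N" using mj sf by simp
      have ch: "\<forall>c. f ! i \<le> c \<and> c < f ! j \<longrightarrow> bef f (c + 1) c"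
      proof (intro allI impI)
        fix c assume "f ! i \<le> c \<and> c < f ! j"
        hence "n < c" "c < N" using lo hi by auto
        thus "bef f (c + 1) c" by (rule bf)
      qed
      have "bef f (f ! j) (f ! i)" using bef_chain[OF df ch lt] .
      thus False using bef_asym[OF df bij] by simp
    qed
  qed
  hence s1: "sorted_wrt (<) (rev f)" by (simp add: sorted_wrt_rev)
  have s2: "sorted_wrt (<) [n+1..<N+1]" by (rule sorted_wrt_upt)
  have "{n+1..<N+1} = {n+1..N}" by auto
  hence s3: "set [n+1..<N+1] = set (rev f)" unfolding set_rev set_upt sf .
  have "[n+1..<N+1] = rev f" by (rule strict_sorted_equal[OF s1 s2 s3])
  hence "f = rev [n+1..<N+1]" by simp
  thus "filter (\<lambda>x. n < x) s = rev [n+1..<N+1]" unfolding f_def .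
qed

lemma app_rep_comps: "A \<in> comps n \<Longrightarrow> A @ replicate k 1 \<in> comps (n + k)"
  by (auto simp: comps_def sum_list_replicate)

lemma glue_rep_comps:
  assumes "A \<in> comps n" "A \<noteq> []" "k \<ge> 1"
  shows "glue A (replicate k 1) \<in> comps (n + k)"
proof -
  obtain B a where A: "A = B @ [a]" using assms(2) by (metis rev_exhaust)
  have r: "replicate k (1::nat) = 1 # replicate (k - 1) 1" using assms(3) by (cases k) auto
  have "glue A (replicate k 1) = B @ [a + 1] @ replicate (k - 1) 1"
    unfolding glue_def A r by simp
  moreover have "sum_list B + a = n" "0 \<notin> set B" using assms(1) A by (auto simp: comps_def)
  ultimately show ?thesis using assms(3) by (auto simp: comps_def sum_list_replicate)
qed

lemma des_glue_rep:
  assumes "A \<in> comps n" "A \<noteq> []" "k \<ge> 1"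
  shows "des (glue A (replicate k 1)) = des A \<union> {n+1..<n+k}"
proof -
  obtain B a where A: "A = B @ [a]" using assms(2) by (metis rev_exhaust)
  have r: "replicate k (1::nat) = 1 # replicate (k - 1) 1" using assms(3) by (cases k) auto
  have e: "glue A (replicate k 1) = (B @ [a + 1]) @ replicate (k - 1) 1"
    unfolding glue_def A r by simp
  have sA: "sum_list B + a = n" using assms(1) A by (simp add: comps_def)
  have d: "des (B @ [a + 1]) = des A" unfolding A des_snoc by simp
  have "des (glue A (replicate k 1)) = des A \<union> {n + 1..<n + 1 + (k - 1)}"
    unfolding e des_rep1 d using sA by simp
  also have "n + 1 + (k - 1) = n + k" using assms(3) by simp
  finally show ?thesis .
qed

lemma RC_eq_iff:
  assumes "s \<in> perms N" "K \<in> comps N"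
  shows "RC s = K \<longleftrightarrow> Rec s = des K"
proof
  assume "RC s = K" thus "Rec s = des K" using RC_perm[OF assms(1)] by simp
next
  assume "Rec s = des K"
  hence "des (RC s) = des K" using RC_perm[OF assms(1)] by simp
  thus "RC s = K" using des_inj[OF RC_perm(1)[OF assms(1)] assms(2)] by simp
qed

lemma ribcoef_RC:
  assumes A: "A \<in> comps n" and s: "s \<in> perms (n + k)" and k: "k \<ge> 1"
  shows "ribcoef A (replicate k 1) (RC s) =
    (if filter (\<lambda>x. n < x) s = rev [n+1..<n+k+1] \<and> RC (filter (\<lambda>x. x \<le> n) s) = A then 1 else 0)"
proof -
  define N where "N = n + k"
  define \<tau> where "\<tau> = filter (\<lambda>x. x \<le> n) s"
  have sN: "s \<in> perms N" using s N_def by simp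
  have tp: "\<tau> \<in> perms n" using filter_perm[OF sN] N_def \<tau>_def by simp
  have Rt: "Rec \<tau> = Rec s \<inter> {1..<n}" using Rec_filter[OF sN] N_def \<tau>_def by simp
  have td: "filter (\<lambda>x. n < x) s = rev [n+1..<n+k+1] \<longleftrightarrow> {n+1..<N} \<subseteq> Rec s"
    unfolding N_def by (rule topdec_iff[OF s le_add1])
  have RtA: "RC \<tau> = A \<longleftrightarrow> Rec \<tau> = des A" using RC_eq_iff[OF tp A] .
  have Rs: "Rec s \<subseteq> {1..<N}" using Rec_sub[of s] perms_len[OF sN] by simp
  have dA: "des A \<subseteq> {1..<n}" using des_sub[OF A] .
  have c1: "A @ replicate k 1 \<in> comps N" using app_rep_comps[OF A] N_def by simp
  have rne: "replicate k (1::nat) \<noteq> []" using k by simp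
  show ?thesis
  proof (cases "A = []")
    case True
    hence n0: "n = 0" using A by (simp add: comps_def)
    have "ribcoef A (replicate k 1) (RC s) = (if RC s = A @ replicate k 1 then 1 else 0)"
      unfolding ribcoef_def using True by simp
    also have "RC s = A @ replicate k 1 \<longleftrightarrow> Rec s = {1..<k}"
      using RC_eq_iff[OF sN c1] True des_rep1[of A k] by simp
    also have "\<dots> \<longleftrightarrow> {n+1..<N} \<subseteq> Rec s" using Rs n0 N_def by auto
    also have "RC \<tau> = A" using RtA Rt n0 True by simp
    ultimately show ?thesis using td \<tau>_def by simp
  next
    case False
    have c2: "glue A (replicate k 1) \<in> comps N" using glue_rep_comps[OF A False k] N_def by simp
    have d1: "des (A @ replicate k 1) = des A \<union> {n..<N}"
      using des_rep1[of A k] False A N_def by (simp add: comps_def)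
    have d2: "des (glue A (replicate k 1)) = des A \<union> {n+1..<N}"
      using des_glue_rep[OF A False k] N_def by simp
    have n1: "n \<ge> 1" using A False by (cases A) (auto simp: comps_def)
    have e1: "RC s = A @ replicate k 1 \<longleftrightarrow> Rec s = des A \<union> {n..<N}"
      using RC_eq_iff[OF sN c1] d1 by simp
    have e2: "RC s = glue A (replicate k 1) \<longleftrightarrow> Rec s = des A \<union> {n+1..<N}"
      using RC_eq_iff[OF sN c2] d2 by simp
    have excl: "\<not> (Rec s = des A \<union> {n..<N} \<and> Rec s = des A \<union> {n+1..<N})"
    proof
      assume h: "Rec s = des A \<union> {n..<N} \<and> Rec s = des A \<union> {n+1..<N}"
      have "n \<in> des A \<union> {n..<N}" using k N_def by simp
      moreover have "n \<notin> des A \<union> {n+1..<N}" using dA by auto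
      moreover have "des A \<union> {n..<N} = des A \<union> {n+1..<N}"
        using trans[OF sym[OF conjunct1[OF h]] conjunct2[OF h]] .
      ultimately show False by blast
    qed
    have key: "(Rec s = des A \<union> {n..<N} \<or> Rec s = des A \<union> {n+1..<N}) \<longleftrightarrow>
        ({n+1..<N} \<subseteq> Rec s \<and> Rec s \<inter> {1..<n} = des A)"
    proof
      assume h: "Rec s = des A \<union> {n..<N} \<or> Rec s = des A \<union> {n+1..<N}"
      have i1: "(des A \<union> {n..<N}) \<inter> {1..<n} = des A" using dA by auto
      have i2: "(des A \<union> {n+1..<N}) \<inter> {1..<n} = des A" using dA by auto
      have "{n+1..<N} \<subseteq> des A \<union> {n..<N}" "{n+1..<N} \<subseteq> des A \<union> {n+1..<N}" by auto
      thus "{n+1..<N} \<subseteq> Rec s \<and> Rec s \<inter> {1..<n} = des A" using h i1 i2 by metis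
    next
      assume h: "{n+1..<N} \<subseteq> Rec s \<and> Rec s \<inter> {1..<n} = des A"
      have "Rec s = (Rec s \<inter> {1..<n}) \<union> (Rec s \<inter> {n}) \<union> (Rec s \<inter> {n+1..<N})"
        using Rs by auto
      also have "Rec s \<inter> {n+1..<N} = {n+1..<N}" using h by blast
      finally have R3: "Rec s = des A \<union> (Rec s \<inter> {n}) \<union> {n+1..<N}" using h by simp
      show "Rec s = des A \<union> {n..<N} \<or> Rec s = des A \<union> {n+1..<N}"
      proof (cases "n \<in> Rec s")
        case True
        hence "Rec s \<inter> {n} = {n}" by blast
        have e: "{n} \<union> {n+1..<N} = {n..<N}" using k N_def by auto
        have "Rec s = des A \<union> ({n} \<union> {n+1..<N})"
          using R3 unfolding \<open>Rec s \<inter> {n} = {n}\<close> by (simp only: Un_assoc)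
        hence "Rec s = des A \<union> {n..<N}" unfolding e .
        thus ?thesis by blast
      next
        case False
        hence "Rec s \<inter> {n} = {}" by blast
        hence "Rec s = des A \<union> {n+1..<N}" using R3 by simp
        thus ?thesis by blast
      qed
    qed
    have "ribcoef A (replicate k 1) (RC s) =
       (if RC s = A @ replicate k 1 then 1 else 0) + (if RC s = glue A (replicate k 1) then 1 else 0)"
      unfolding ribcoef_def using False rne by simp
    also have "\<dots> = (if {n+1..<N} \<subseteq> Rec s \<and> Rec s \<inter> {1..<n} = des A then 1 else 0)"
    proof (cases "Rec s = des A \<union> {n..<N}")
      case True
      hence "\<not> Rec s = des A \<union> {n+1..<N}" using excl by blast
      thus ?thesis unfolding e1 e2 using True key by simp
    next
      case F1: False
      show ?thesis
      proof (cases "Rec s = des A \<union> {n+1..<N}")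
        case True thus ?thesis unfolding e1 e2 using F1 key by simp
      next
        case False thus ?thesis unfolding e1 e2 using F1 key by simp
      qed
    qed
    finally show ?thesis using td RtA Rt \<tau>_def by simp
  qed
qed

lemma in_shuffles_Cons_right:
  "zs \<in> shuffles xs (y # ys) \<longleftrightarrow>
     (\<exists>p w. p \<le> length xs \<and> w \<in> shuffles (drop p xs) ys \<and> zs = take p xs @ y # w)"
proof (induction xs arbitrary: zs)
  case Nil thus ?case by auto
next
  case (Cons x xs)
  show ?case
  proof (cases zs)
    case Nil thus ?thesis by auto
  next
    case (Cons z zs')
    have "zs \<in> shuffles (x # xs) (y # ys) \<longleftrightarrow>
       (z = x \<and> zs' \<in> shuffles xs (y # ys)) \<or> (z = y \<and> zs' \<in> shuffles (x # xs) ys)"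
      unfolding Cons by (simp add: Cons_in_shuffles_iff) blast
    also have "\<dots> \<longleftrightarrow> (\<exists>p w. p \<le> length (x # xs) \<and> w \<in> shuffles (drop p (x # xs)) ys \<and>
        zs = take p (x # xs) @ y # w)"
    proof
      assume "(z = x \<and> zs' \<in> shuffles xs (y # ys)) \<or> (z = y \<and> zs' \<in> shuffles (x # xs) ys)"
      thus "\<exists>p w. p \<le> length (x # xs) \<and> w \<in> shuffles (drop p (x # xs)) ys \<and> zs = take p (x # xs) @ y # w"
      proof
        assume h: "z = x \<and> zs' \<in> shuffles xs (y # ys)"
        then obtain p w where "p \<le> length xs" "w \<in> shuffles (drop p xs) ys" "zs' = take p xs @ y # w"
          using Cons.IH by blast
        hence "Suc p \<le> length (x # xs)" "w \<in> shuffles (drop (Suc p) (x # xs)) ys"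
          "zs = take (Suc p) (x # xs) @ y # w" using h \<open>zs = z # zs'\<close> by auto
        thus ?thesis by blast
      next
        assume h: "z = y \<and> zs' \<in> shuffles (x # xs) ys"
        hence "0 \<le> length (x # xs)" "zs' \<in> shuffles (drop 0 (x # xs)) ys"
          "zs = take 0 (x # xs) @ y # zs'" using \<open>zs = z # zs'\<close> by auto
        thus ?thesis by blast
      qed
    next
      assume "\<exists>p w. p \<le> length (x # xs) \<and> w \<in> shuffles (drop p (x # xs)) ys \<and> zs = take p (x # xs) @ y # w"
      then obtain p w where pw: "p \<le> length (x # xs)" "w \<in> shuffles (drop p (x # xs)) ys"
        "zs = take p (x # xs) @ y # w" by blast
      show "(z = x \<and> zs' \<in> shuffles xs (y # ys)) \<or> (z = y \<and> zs' \<in> shuffles (x # xs) ys)"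
      proof (cases p)
        case 0 thus ?thesis using pw \<open>zs = z # zs'\<close> by auto
      next
        case (Suc p')
        hence "z = x" "zs' = take p' xs @ y # w" "p' \<le> length xs" "w \<in> shuffles (drop p' xs) ys"
          using pw \<open>zs = z # zs'\<close> by auto
        hence "zs' \<in> shuffles xs (y # ys)" using Cons.IH by blast
        thus ?thesis using \<open>z = x\<close> by blast
      qed
    qed
    finally show ?thesis .
  qed
qed

lemma shuffles_Cons_right:
  "shuffles xs (y # ys) = (\<Union>p\<in>{0..length xs}. (\<lambda>w. take p xs @ y # w) ` shuffles (drop p xs) ys)"
  using in_shuffles_Cons_right[of _ xs y ys] by fastforce



lemma shuffle_count:
  assumes tp: "\<tau> \<in> perms n" and k: "k \<ge> 1" and N: "N = n + k"
  shows "(\<Sum>s\<in>shuffles \<tau> (rev [n+1..<N+1]). (if SC s = J then 1 else 0 :: rat)) =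
    (\<Sum>p\<in>{0..n}. if J = trunc (SC \<tau>) p @ [N - p] then of_nat ((N - 1 - p) choose (k - 1)) else 0)"
proof -
  define \<beta>' where "\<beta>' = rev [n+1..<N]"
  have bN: "rev [n+1..<N+1] = N # \<beta>'" using N k by (simp add: \<beta>'_def)
  have dt: "distinct \<tau>" and st: "set \<tau> = {1..n}" using tp by (auto simp: perms_def)
  have lt: "length \<tau> = n" using perms_len[OF tp] .
  have sb: "set \<beta>' = {n+1..<N}" by (simp add: \<beta>'_def)
  have db: "distinct (N # \<beta>')" using sb by (simp add: \<beta>'_def)
  have nN: "n < N" using N k by simp
  have disj: "set \<tau> \<inter> set (N # \<beta>') = {}" using st sb nN by auto
  define F where "F p = (\<lambda>w. take p \<tau> @ N # w) ` shuffles (drop p \<tau>) \<beta>'" for p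
  have U: "shuffles \<tau> (rev [n+1..<N+1]) = (\<Union>p\<in>{0..n}. F p)"
    unfolding bN shuffles_Cons_right lt F_def ..
  have Nt: "N \<notin> set \<tau>" using st nN by auto
  have Nw: "N \<notin> set w" if "w \<in> shuffles (drop p \<tau>) \<beta>'" for w p
  proof -
    have "set w = set (drop p \<tau>) \<union> set \<beta>'" using set_shuffles[OF that] .
    moreover have "set (drop p \<tau>) \<subseteq> set \<tau>" by (rule set_drop_subset)
    ultimately show ?thesis using Nt sb by auto
  qed
  have dis: "\<forall>p\<in>{0..n}. \<forall>p'\<in>{0..n}. p \<noteq> p' \<longrightarrow> F p \<inter> F p' = {}"
  proof (intro ballI impI)
    fix p p' assume pp: "p \<in> {0..n}" "p' \<in> {0..n}" "p \<noteq> p'"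
    show "F p \<inter> F p' = {}"
    proof (rule ccontr)
      assume "F p \<inter> F p' \<noteq> {}"
      then obtain w w' where w: "w \<in> shuffles (drop p \<tau>) \<beta>'" "w' \<in> shuffles (drop p' \<tau>) \<beta>'"
        "take p \<tau> @ N # w = take p' \<tau> @ N # w'" unfolding F_def by auto
      have "N \<notin> set (take p \<tau>)" using Nt in_set_takeD by fastforce
      hence "take p \<tau> = take p' \<tau>" using append_Cons_eq_iff[OF _ Nw[OF w(1)]] w(3) by blast
      hence "length (take p \<tau>) = length (take p' \<tau>)" by simp
      thus False using pp lt by simp
    qed
  qed
  have fin: "\<forall>p\<in>{0..n}. finite (F p)" unfolding F_def by simp
  have "(\<Sum>s\<in>shuffles \<tau> (rev [n+1..<N+1]). (if SC s = J then 1 else 0 :: rat)) =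
      (\<Sum>p\<in>{0..n}. \<Sum>s\<in>F p. (if SC s = J then 1 else 0 :: rat))"
    unfolding U by (rule sum.UNION_disjoint) (use fin dis in auto)
  also have "\<dots> = (\<Sum>p\<in>{0..n}. if J = trunc (SC \<tau>) p @ [N - p] then of_nat ((N - 1 - p) choose (k - 1)) else 0)"
  proof (rule sum.cong[OF refl])
    fix p assume p: "p \<in> {0..n}"
    have inj: "inj_on (\<lambda>w. take p \<tau> @ N # w) (shuffles (drop p \<tau>) \<beta>')"
      by (rule inj_onI) simp
    have SCw: "SC (take p \<tau> @ N # w) = trunc (SC \<tau>) p @ [N - p]"
      if w: "w \<in> shuffles (drop p \<tau>) \<beta>'" for w
    proof -
      have "take p \<tau> @ N # w \<in> shuffles \<tau> (N # \<beta>')"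
        using in_shuffles_Cons_right[of _ \<tau> N \<beta>'] p lt w by auto
      hence dd: "distinct (take p \<tau> @ N # w)"
        using distinct_disjoint_shuffles[OF dt db disj] by blast
      have a1: "\<forall>x\<in>set (take p \<tau>). x < N" using st nN in_set_takeD by fastforce
      have "set w = set (drop p \<tau>) \<union> set \<beta>'" using set_shuffles[OF w] .
      moreover have "set (drop p \<tau>) \<subseteq> set \<tau>" by (rule set_drop_subset)
      ultimately have a2: "\<forall>x\<in>set w. x < N" using st sb nN by auto
      have "SC (take p \<tau> @ N # w) = SC (take p \<tau>) @ [length w + 1]"
        using SC_snoc_max[OF dd a1 a2] .
      moreover have "SC (take p \<tau>) = trunc (SC \<tau>) p" using SC_take[OF dt] .
      moreover have "length w = (n - p) + (k - 1)"
        using length_shuffles[OF w] lt by (simp add: \<beta>'_def N)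
      ultimately show ?thesis using p k N by auto
    qed
    have "(\<Sum>s\<in>F p. (if SC s = J then 1 else 0 :: rat)) =
        (\<Sum>w\<in>shuffles (drop p \<tau>) \<beta>'. (if SC (take p \<tau> @ N # w) = J then 1 else 0 :: rat))"
      unfolding F_def by (rule sum.reindex[OF inj, unfolded comp_def])
    also have "\<dots> = (\<Sum>w\<in>shuffles (drop p \<tau>) \<beta>'. (if J = trunc (SC \<tau>) p @ [N - p] then 1 else 0 :: rat))"
      by (rule sum.cong[OF refl]) (use SCw in auto)
    also have "\<dots> = of_nat (card (shuffles (drop p \<tau>) \<beta>')) * (if J = trunc (SC \<tau>) p @ [N - p] then 1 else 0)"
      by simp
    also have "card (shuffles (drop p \<tau>) \<beta>') = (length (drop p \<tau>) + length \<beta>') choose length (drop p \<tau>)"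
    proof (rule card_disjoint_shuffles)
      show "set (drop p \<tau>) \<inter> set \<beta>' = {}" using disj set_drop_subset[of p \<tau>] by auto
    qed
    also have "length (drop p \<tau>) + length \<beta>' = (n - p) + (k - 1)" using lt by (simp add: \<beta>'_def N)
    also have "length (drop p \<tau>) = n - p" using lt by simp
    also have "(n - p + (k - 1)) choose (n - p) = (n - p + (k - 1)) choose (k - 1)"
      using binomial_symmetric[of "n - p" "n - p + (k - 1)"] by simp
    also have "n - p + (k - 1) = N - 1 - p" using p k N by auto
    finally show "(\<Sum>s\<in>F p. (if SC s = J then 1 else 0 :: rat)) =
        (if J = trunc (SC \<tau>) p @ [N - p] then of_nat ((N - 1 - p) choose (k - 1)) else 0)" by simp
  qed
  finally show ?thesis .
qed


lemma rep_comps: "k \<ge> 1 \<Longrightarrow> replicate k 1 \<in> comps m \<longleftrightarrow> m = k"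
  by (auto simp: comps_def sum_list_replicate)

lemma L_formula:
  assumes I: "I \<in> comps n" and k: "k \<ge> 1"
  shows "symmult (Vp I) (Lambda k) K = (if sum_list K = n + k then
     (\<Sum>A\<in>comps n. Vp I A * ribcoef A (replicate k 1) K) else 0)"
proof -
  define S where "S = sum_list K"
  have V0: "Vp I A = 0" if "A \<notin> comps n" for A using Vp_char(1)[OF I] that by blast
  have inner: "(\<Sum>A\<in>comps m. \<Sum>B\<in>comps (S - m). Vp I A * Lambda k B * ribcoef A B K) =
     (if m = n then (if S - n = k then (\<Sum>A\<in>comps n. Vp I A * ribcoef A (replicate k 1) K) else 0) else 0)"
    for m
  proof -
    have "(\<Sum>B\<in>comps (S - m). Vp I A * Lambda k B * ribcoef A B K) =
        (if S - m = k then Vp I A * ribcoef A (replicate k 1) K else 0)" for A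
    proof -
      have "(\<Sum>B\<in>comps (S - m). Vp I A * Lambda k B * ribcoef A B K) =
          (\<Sum>B\<in>comps (S - m). if B = replicate k 1 then Vp I A * ribcoef A (replicate k 1) K else 0)"
        by (rule sum.cong) (auto simp: Lambda_def)
      also have "\<dots> = (if replicate k 1 \<in> comps (S - m) then Vp I A * ribcoef A (replicate k 1) K else 0)"
        using finite_comps by (rule sum.delta)
      finally show ?thesis using rep_comps[OF k] by simp
    qed
    hence "(\<Sum>A\<in>comps m. \<Sum>B\<in>comps (S - m). Vp I A * Lambda k B * ribcoef A B K) =
        (\<Sum>A\<in>comps m. if S - m = k then Vp I A * ribcoef A (replicate k 1) K else 0)" by simp
    also have "\<dots> = (if m = n then (if S - n = k then (\<Sum>A\<in>comps n. Vp I A * ribcoef A (replicate k 1) K) else 0) else 0)"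
    proof (cases "m = n")
      case False
      have "A \<notin> comps n" if "A \<in> comps m" for A using that False by (auto simp: comps_def)
      thus ?thesis using False V0 by (auto intro!: sum.neutral)
    qed simp
    finally show ?thesis .
  qed
  have "symmult (Vp I) (Lambda k) K = (\<Sum>m\<in>{0..S}. \<Sum>A\<in>comps m. \<Sum>B\<in>comps (S - m). Vp I A * Lambda k B * ribcoef A B K)"
    unfolding symmult_def S_def ..
  also have "\<dots> = (\<Sum>m\<in>{0..S}. if m = n then (if S - n = k then (\<Sum>A\<in>comps n. Vp I A * ribcoef A (replicate k 1) K) else 0) else 0)"
    using inner by simp
  also have "\<dots> = (if n \<in> {0..S} then (if S - n = k then (\<Sum>A\<in>comps n. Vp I A * ribcoef A (replicate k 1) K) else 0) else 0)"
    by (rule sum.delta) simp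
  also have "\<dots> = (if S = n + k then (\<Sum>A\<in>comps n. Vp I A * ribcoef A (replicate k 1) K) else 0)"
    by auto
  finally show ?thesis unfolding S_def .
qed

lemma L_supp:
  assumes I: "I \<in> comps n" and k: "k \<ge> 1" and K: "K \<notin> comps (n + k)"
  shows "symmult (Vp I) (Lambda k) K = 0"
proof -
  have "ribcoef A (replicate k 1) K = 0" if A: "A \<in> comps n" for A
  proof -
    have "K \<noteq> A @ replicate k 1" using app_rep_comps[OF A, of k] K by auto
    moreover have "A \<noteq> [] \<Longrightarrow> K \<noteq> glue A (replicate k 1)" using glue_rep_comps[OF A _ k] K by auto
    ultimately show ?thesis unfolding ribcoef_def by auto
  qed
  thus ?thesis unfolding L_formula[OF I k] by simp
qed

lemma L_RC:
  assumes I: "I \<in> comps n" and k: "k \<ge> 1" and s: "s \<in> perms (n + k)"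
  shows "symmult (Vp I) (Lambda k) (RC s) =
    (if filter (\<lambda>x. n < x) s = rev [n+1..<n+k+1] then Vp I (RC (filter (\<lambda>x. x \<le> n) s)) else 0)"
proof -
  define \<tau> where "\<tau> = filter (\<lambda>x. x \<le> n) s"
  have tp: "\<tau> \<in> perms n" using filter_perm[OF s] \<tau>_def by simp
  have Rt: "RC \<tau> \<in> comps n" using RC_perm(1)[OF tp] .
  have sR: "sum_list (RC s) = n + k" using RC_perm(1)[OF s] by (simp add: comps_def)
  have "symmult (Vp I) (Lambda k) (RC s) = (\<Sum>A\<in>comps n. Vp I A * ribcoef A (replicate k 1) (RC s))"
    unfolding L_formula[OF I k] using sR by simp
  also have "\<dots> = (\<Sum>A\<in>comps n. if filter (\<lambda>x. n < x) s = rev [n+1..<n+k+1] \<and> A = RC \<tau>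
       then Vp I A else 0)"
  proof (rule sum.cong[OF refl])
    fix A assume A: "A \<in> comps n"
    show "Vp I A * ribcoef A (replicate k 1) (RC s) = (if filter (\<lambda>x. n < x) s = rev [n+1..<n+k+1] \<and> A = RC \<tau>
       then Vp I A else 0)"
      unfolding ribcoef_RC[OF A s k] \<tau>_def[symmetric] by auto
  qed
  also have "\<dots> = (if filter (\<lambda>x. n < x) s = rev [n+1..<n+k+1] then Vp I (RC \<tau>) else 0)"
  proof (cases "filter (\<lambda>x. n < x) s = rev [n+1..<n+k+1]")
    case True
    hence "(\<Sum>A\<in>comps n. if filter (\<lambda>x. n < x) s = rev [n+1..<n+k+1] \<and> A = RC \<tau> then Vp I A else 0)
       = (\<Sum>A\<in>comps n. if A = RC \<tau> then Vp I A else 0)" by simp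
    also have "\<dots> = Vp I (RC \<tau>)" using finite_comps Rt by (simp add: sum.delta)
    finally show ?thesis using True by simp
  qed simp
  finally show ?thesis unfolding \<tau>_def .
qed

lemma fiber:
  assumes tp: "\<tau> \<in> perms n"
  shows "{s \<in> {s \<in> perms (n + k). filter (\<lambda>x. n < x) s = rev [n+1..<n+k+1]}.
      filter (\<lambda>x. x \<le> n) s = \<tau>} = shuffles \<tau> (rev [n+1..<n+k+1])"
proof (intro equalityI subsetI)
  fix s assume "s \<in> {s \<in> {s \<in> perms (n + k). filter (\<lambda>x. n < x) s = rev [n+1..<n+k+1]}.
      filter (\<lambda>x. x \<le> n) s = \<tau>}"
  hence h: "filter (\<lambda>x. n < x) s = rev [n+1..<n+k+1]" "filter (\<lambda>x. x \<le> n) s = \<tau>" by auto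
  have "s \<in> shuffles (filter (\<lambda>x. x \<le> n) s) (filter (\<lambda>x. \<not> x \<le> n) s)"
    by (rule partition_in_shuffles)
  moreover have "filter (\<lambda>x. \<not> x \<le> n) s = filter (\<lambda>x. n < x) s" by (rule filter_cong) auto
  ultimately show "s \<in> shuffles \<tau> (rev [n+1..<n+k+1])" using h by simp
next
  fix s assume s: "s \<in> shuffles \<tau> (rev [n+1..<n+k+1])"
  have dt: "distinct \<tau>" and st: "set \<tau> = {1..n}" using tp by (auto simp: perms_def)
  have sb: "set (rev [n+1..<n+k+1]) = {n+1..n+k}" by auto
  have disj: "set \<tau> \<inter> set (rev [n+1..<n+k+1]) = {}" using st sb by auto
  have ds: "distinct s" using distinct_disjoint_shuffles[OF dt _ disj s] by simp
  have ss: "set s = {1..n+k}" using set_shuffles[OF s] st sb by auto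
  have f1: "filter (\<lambda>x. x \<in> set \<tau>) s = \<tau>" "filter (\<lambda>x. x \<notin> set \<tau>) s = rev [n+1..<n+k+1]"
    using filter_shuffles_disjoint1[OF disj s] by auto
  have "filter (\<lambda>x. x \<le> n) s = filter (\<lambda>x. x \<in> set \<tau>) s" using ss st by (intro filter_cong) auto
  moreover have "filter (\<lambda>x. n < x) s = filter (\<lambda>x. x \<notin> set \<tau>) s" using ss st by (intro filter_cong) auto
  ultimately show "s \<in> {s \<in> {s \<in> perms (n + k). filter (\<lambda>x. n < x) s = rev [n+1..<n+k+1]}.
      filter (\<lambda>x. x \<le> n) s = \<tau>}" using f1 ds ss by (simp add: perms_def)
qed



lemma inner_tau:
  assumes I: "I \<in> comps n"
  shows "(\<Sum>\<tau>\<in>perms n. if J = trunc (SC \<tau>) p @ [c] then Vp I (RC \<tau>) else 0) =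
    (if J = trunc I p @ [c] then 1 else 0)"
proof -
  have img: "SC ` perms n \<subseteq> comps n" using SC_comps perms_len by (auto simp: perms_def)
  have "(\<Sum>\<tau>\<in>perms n. if J = trunc (SC \<tau>) p @ [c] then Vp I (RC \<tau>) else 0) =
      (\<Sum>I'\<in>comps n. \<Sum>\<tau>\<in>{\<tau> \<in> perms n. SC \<tau> = I'}. if J = trunc (SC \<tau>) p @ [c] then Vp I (RC \<tau>) else 0)"
    by (rule sum.group[symmetric]) (use finite_perms finite_comps img in auto)
  also have "\<dots> = (\<Sum>I'\<in>comps n. if J = trunc I' p @ [c] then pr I' (Vp I) else 0)"
  proof (rule sum.cong[OF refl])
    fix I' assume I': "I' \<in> comps n"
    have sI: "sum_list I' = n" using I' by (simp add: comps_def)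
    have "(\<Sum>\<tau>\<in>{\<tau> \<in> perms n. SC \<tau> = I'}. if J = trunc (SC \<tau>) p @ [c] then Vp I (RC \<tau>) else 0) =
        (\<Sum>\<tau>\<in>{\<tau> \<in> perms n. SC \<tau> = I'}. if J = trunc I' p @ [c] then Vp I (RC \<tau>) else 0)"
      by (rule sum.cong) auto
    also have "\<dots> = (if J = trunc I' p @ [c] then pr I' (Vp I) else 0)"
      unfolding pr_def sI by simp
    finally show "(\<Sum>\<tau>\<in>{\<tau> \<in> perms n. SC \<tau> = I'}. if J = trunc (SC \<tau>) p @ [c] then Vp I (RC \<tau>) else 0) =
        (if J = trunc I' p @ [c] then pr I' (Vp I) else 0)" .
  qed
  also have "\<dots> = (\<Sum>I'\<in>comps n. if I' = I then (if J = trunc I p @ [c] then 1 else 0) else 0)"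
    by (rule sum.cong[OF refl]) (use Vp_char(2)[OF I] in auto)
  also have "\<dots> = (if J = trunc I p @ [c] then 1 else 0)"
    using finite_comps I by (simp add: sum.delta)
  finally show ?thesis .
qed


lemma prL:
  assumes I: "I \<in> comps n" and k: "k \<ge> 1" and J: "J \<in> comps (n + k)"
  shows "pr J (symmult (Vp I) (Lambda k)) =
    (\<Sum>p\<in>{0..n}. if J = trunc I p @ [n + k - p] then of_nat ((n + k - 1 - p) choose (k - 1)) else 0)"
proof -
  define N where "N = n + k"
  define L where "L = symmult (Vp I) (Lambda k)"
  define \<beta> where "\<beta> = rev [n+1..<n+k+1]"
  define T where "T = {s \<in> perms N. filter (\<lambda>x. n < x) s = \<beta>}"
  define g where "g s = (if SC s = J then Vp I (RC (filter (\<lambda>x. x \<le> n) s)) else 0)" for s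
  have sJ: "sum_list J = N" using J N_def by (simp add: comps_def)
  have "pr J L = (\<Sum>s\<in>perms N. if SC s = J then L (RC s) else 0)"
    unfolding pr_def sJ using finite_perms by (rule sum.inter_filter)
  also have "\<dots> = (\<Sum>s\<in>perms N. if filter (\<lambda>x. n < x) s = \<beta> then g s else 0)"
    by (rule sum.cong[OF refl]) (auto simp: L_def L_RC[OF I k] N_def g_def \<beta>_def)
  also have "\<dots> = (\<Sum>s\<in>T. g s)"
    unfolding T_def using finite_perms by (rule sum.inter_filter[symmetric])
  also have "\<dots> = (\<Sum>\<tau>\<in>perms n. \<Sum>s\<in>{s \<in> T. filter (\<lambda>x. x \<le> n) s = \<tau>}. g s)"
  proof (rule sum.group[symmetric])
    show "finite T" using finite_perms by (simp add: T_def)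
    show "finite (perms n)" by (rule finite_perms)
    show "(\<lambda>s. filter (\<lambda>x. x \<le> n) s) ` T \<subseteq> perms n"
      using filter_perm N_def by (auto simp: T_def)
  qed
  also have "\<dots> = (\<Sum>\<tau>\<in>perms n. \<Sum>s\<in>shuffles \<tau> \<beta>. (if SC s = J then 1 else 0) * Vp I (RC \<tau>))"
  proof (rule sum.cong[OF refl])
    fix \<tau> assume tp: "\<tau> \<in> perms n"
    have fe: "{s \<in> T. filter (\<lambda>x. x \<le> n) s = \<tau>} = shuffles \<tau> \<beta>"
      using fiber[OF tp, of k] unfolding T_def N_def \<beta>_def .
    show "(\<Sum>s\<in>{s \<in> T. filter (\<lambda>x. x \<le> n) s = \<tau>}. g s) =
        (\<Sum>s\<in>shuffles \<tau> \<beta>. (if SC s = J then 1 else 0) * Vp I (RC \<tau>))"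
      unfolding fe[symmetric] by (rule sum.cong[OF refl]) (auto simp: g_def)
  qed
  also have "\<dots> = (\<Sum>\<tau>\<in>perms n. Vp I (RC \<tau>) *
       (\<Sum>p\<in>{0..n}. if J = trunc (SC \<tau>) p @ [N - p] then of_nat ((N - 1 - p) choose (k - 1)) else 0))"
  proof (rule sum.cong[OF refl])
    fix \<tau> assume tp: "\<tau> \<in> perms n"
    have "(\<Sum>s\<in>shuffles \<tau> \<beta>. (if SC s = J then 1 else 0) * Vp I (RC \<tau>)) =
        Vp I (RC \<tau>) * (\<Sum>s\<in>shuffles \<tau> \<beta>. (if SC s = J then 1 else 0 :: rat))"
      by (simp add: sum_distrib_left mult.commute)
    also have "(\<Sum>s\<in>shuffles \<tau> \<beta>. (if SC s = J then 1 else 0 :: rat)) =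
       (\<Sum>p\<in>{0..n}. if J = trunc (SC \<tau>) p @ [N - p] then of_nat ((N - 1 - p) choose (k - 1)) else 0)"
      using shuffle_count[OF tp k N_def] unfolding \<beta>_def N_def by simp
    finally show "(\<Sum>s\<in>shuffles \<tau> \<beta>. (if SC s = J then 1 else 0) * Vp I (RC \<tau>)) =
      Vp I (RC \<tau>) * (\<Sum>p\<in>{0..n}. if J = trunc (SC \<tau>) p @ [N - p] then of_nat ((N - 1 - p) choose (k - 1)) else 0)" .
  qed
  also have "\<dots> = (\<Sum>p\<in>{0..n}. of_nat ((N - 1 - p) choose (k - 1)) *
       (\<Sum>\<tau>\<in>perms n. if J = trunc (SC \<tau>) p @ [N - p] then Vp I (RC \<tau>) else 0))"
    by (simp add: sum_distrib_left sum.swap[of _ "perms n"] if_distrib mult.commute cong: if_cong)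
  also have "\<dots> = (\<Sum>p\<in>{0..n}. of_nat ((N - 1 - p) choose (k - 1)) *
       (if J = trunc I p @ [N - p] then 1 else 0))"
    by (simp add: inner_tau[OF I])
  also have "\<dots> = (\<Sum>p\<in>{0..n}. if J = trunc I p @ [n + k - p] then of_nat ((n + k - 1 - p) choose (k - 1)) else 0)"
    by (rule sum.cong[OF refl]) (simp add: N_def)
  finally show ?thesis unfolding L_def .
qed


lemma pr_lin: "pr J (\<lambda>K. \<Sum>j\<in>A. c j * f j K) = (\<Sum>j\<in>A. c j * pr J (f j))"
  unfolding pr_def by (simp add: sum_distrib_left sum.swap[of _ A])

theorem mainTheorem5:
  fixes I :: "nat list" and n k :: nat
  assumes "I \<in> comps n" and "k \<ge> 1"
  shows "symmult (Vp I) (Lambda k) =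
    (\<lambda>K. \<Sum>j=0..n. of_nat ((k + j - 1) choose (k - 1)) * Vp (trunc I (n - j) @ [k + j]) K)"
proof -
  note I = assms(1) and k = assms(2)
  define N where "N = n + k"
  define L where "L = symmult (Vp I) (Lambda k)"
  define R where "R = (\<lambda>K. \<Sum>j=0..n. of_nat ((k + j - 1) choose (k - 1)) * Vp (trunc I (n - j) @ [k + j]) K)"
  have cj: "trunc I (n - j) @ [k + j] \<in> comps N" if "j \<le> n" for j
  proof -
    have "trunc I (n - j) \<in> comps (n - j)" using trunc_comps[OF I] by simp
    thus ?thesis using that k by (auto simp: comps_def N_def)
  qed
  have suppL: "\<forall>K. K \<notin> comps N \<longrightarrow> L K = 0" using L_supp[OF I k] by (simp add: L_def N_def)
  have suppR: "\<forall>K. K \<notin> comps N \<longrightarrow> R K = 0"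
  proof (intro allI impI)
    fix K assume K: "K \<notin> comps N"
    have "Vp (trunc I (n - j) @ [k + j]) K = 0" if "j \<in> {0..n}" for j
      using Vp_char(1)[OF cj] K that by auto
    thus "R K = 0" unfolding R_def by simp
  qed
  have prEq: "pr J L = pr J R" if J: "J \<in> comps N" for J
  proof -
    have "pr J L = (\<Sum>p\<in>{0..n}. if J = trunc I p @ [n + k - p] then of_nat ((n + k - 1 - p) choose (k - 1)) else 0)"
      unfolding L_def using prL[OF I k] J N_def by simp
    also have "\<dots> = (\<Sum>j\<in>{0..n}. if J = trunc I (n + 0 - j) @ [n + k - (n + 0 - j)]
        then of_nat ((n + k - 1 - (n + 0 - j)) choose (k - 1)) else 0)"
      by (rule sum.atLeastAtMost_rev)
    also have "\<dots> = (\<Sum>j\<in>{0..n}. of_nat ((k + j - 1) choose (k - 1)) * pr J (Vp (trunc I (n - j) @ [k + j])))"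
    proof (rule sum.cong[OF refl])
      fix j assume j: "j \<in> {0..n}"
      have e1: "n + k - (n + 0 - j) = k + j" "n + k - 1 - (n + 0 - j) = k + j - 1" using j k by auto
      have "pr J (Vp (trunc I (n - j) @ [k + j])) = (if J = trunc I (n - j) @ [k + j] then 1 else 0)"
        using Vp_char(2)[OF cj] J j by auto
      thus "(if J = trunc I (n + 0 - j) @ [n + k - (n + 0 - j)]
        then of_nat ((n + k - 1 - (n + 0 - j)) choose (k - 1)) else 0) =
        of_nat ((k + j - 1) choose (k - 1)) * pr J (Vp (trunc I (n - j) @ [k + j]))"
        unfolding e1 by simp
    qed
    also have "\<dots> = pr J R" unfolding R_def by (rule pr_lin[symmetric])
    finally show ?thesis .
  qed
  have "L K = R K" for K
    using uniq[of N "\<lambda>K. L K - R K" K] suppL suppR prEq by (simp add: pr_diff)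
  thus ?thesis unfolding L_def R_def by (rule ext)
qed


end
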